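(* For every $\varepsilon\in(0,1]$ there exists $b_0$ such that for every $b\geq b_0$ there exists $\gamma_0>0$ such that for every $\gamma\in(0,\gamma_0]$ there exists $n_0$ such that for every $n\geq n_0$ the following holds. Let $G$ be an $(n,\varepsilon)$-digraph that is an induced subdigraph of some digraph $F$. Let $u\in V(F)\setminus V(G)$ and let $\mathbf{x}$ be a $b$-normal perfect fractional matching of $G$. Let $\Delta:=e^{\gamma\sqrt{\ln n}}$, let $n^{1/4}\leq m\leq3\Delta n^{1/4}$, and let $M\subseteq V(G)$ with $|M|=m+1$. Suppose that for all $v\in V(G)$ and $*\in\{+,-\}$: (i) $\sum_{w\in M\cap N_G^+(v)}\mathbf{x}_{vw}=\frac{m+1}n\pm n^{-\frac34-\frac1{18\sqrt{\ln n}}}$ and $\sum_{w\in M\cap N_G^-(v)}\mathbf{x}_{wv}=\frac{m+1}n\pm n^{-\frac34-\frac1{18\sqrt{\ln n}}}$; (ii) $\sum_{w\in M\cap N_G^+(v)}\mathbf{x}_{vw}\log\frac1{\mathbf{x}_{vw}}=\frac{m+1}nh^+_{\mathbf{x}}(v)\pm n^{-\frac34-\frac1{18\sqrt{\ln n}}}$ and $\sum_{w\in M\cap N_G^-(v)}\mathbf{x}_{wv}\log\frac1{\mathbf{x}_{wv}}=\frac{m+1}nh^-_{\mathbf{x}}(v)\pm n^{-\frac34-\frac1{18\sqrt{\ln n}}}$; (iii) $|N^*_{F,G}(u)|\geq(\frac12+\varepsilon)n$; (iv) $|N^*_{F,G}(u)\cap M|=\frac{m+1}n|N^*_{F,G}(u)|\pm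 n^{\frac14-\frac1{17\sqrt{\ln n}}}$. Then there is a $(1+n^{-\frac34-\frac1{22\sqrt{\ln n}}})b$-normal perfect fractional matching $\mathbf{z}$ of $F[(V(G)\setminus M)\cup\{u\}]$ with $h(\mathbf{z})\geq\frac{n-m}nh(\mathbf{x})-(n-m)\log\frac n{n-m}-n^{\frac14-\frac1{24\sqrt{\ln n}}}$.
   Context: $\log=\log_2$, $\ln$ is the natural logarithm. $a=\beta\pm c$ means $\beta-c\leq a\leq\beta+c$. Digraphs have no loops and at most one edge from $v$ to $w$ per ordered pair; $N^+_G(v),N^-_G(v)$ are out-/in-neighbourhoods, and $N^*_{F,G}(u)=N^*_F(u)\cap V(G)$. An $(n,\varepsilon)$-digraph is a digraph on $n$ vertices with every in- and out-degree at least $(\frac12+\varepsilon)n$. A perfect fractional matching of a digraph $H$ is $\mathbf{x}\colon E(H)\to\mathbb{R}_{\geq0}$ with $\sum_{w\in N^+(v)}\mathbf{x}_{vw}=1=\sum_{w\in N^-(v)}\mathbf{x}_{wv}$ for all $v$; it is $b$-normal if $\frac1{b|V(H)|}\leq\mathbf{x}_e\leq\frac b{|V(H)|}$ for all edges $e$. $h(\mathbf{x})=\sum_e\mathbf{x}_e\log\frac1{\mathbf{x}_e}$, $h^+_{\mathbf{x}}(v)=\sum_{w\in N^+(v)}\mathbf{x}_{vw}\log\frac1{\mathbf{x}_{vw}}$, $h^-_{\mathbf{x}}(v)=\sum_{w\in N^-(v)}\mathbf{x}_{wv}\log\frac1{\mathbf{x}_{wv}}$. $F[S]$ is the induced subdigraph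 on $S$. *)

theory Defs
  imports Complex_Main
begin

definition digraph :: "'a set \<Rightarrow> ('a \<times> 'a) set \<Rightarrow> bool" where
  "digraph V E \<longleftrightarrow> E \<subseteq> V \<times> V \<and> (\<forall>v. (v, v) \<notin> E)"

definition out_nbrs :: "('a \<times> 'a) set \<Rightarrow> 'a \<Rightarrow> 'a set" where
  "out_nbrs E v = {w. (v, w) \<in> E}"

definition in_nbrs :: "('a \<times> 'a) set \<Rightarrow> 'a \<Rightarrow> 'a set" where
  "in_nbrs E v = {w. (w, v) \<in> E}"

definition induced_edges :: "('a \<times> 'a) set \<Rightarrow> 'a set \<Rightarrow> ('a \<times> 'a) set" where
  "induced_edges E S = E \<inter> (S \<times> S)"

definition n_eps_digraph :: "nat \<Rightarrow> real \<Rightarrow> 'a set \<Rightarrow> ('a \<times> 'a) set \<Rightarrow> bool" where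
  "n_eps_digraph n \<epsilon> V E \<longleftrightarrow> digraph V E \<and> finite V \<and> card V = n \<and>
     (\<forall>v\<in>V. real (card (out_nbrs E v)) \<ge> (1/2 + \<epsilon>) * n \<and>
             real (card (in_nbrs E v)) \<ge> (1/2 + \<epsilon>) * n)"

definition perfect_frac_matching :: "'a set \<Rightarrow> ('a \<times> 'a) set \<Rightarrow> ('a \<times> 'a \<Rightarrow> real) \<Rightarrow> bool" where
  "perfect_frac_matching V E x \<longleftrightarrow> (\<forall>e\<in>E. x e \<ge> 0) \<and>
     (\<forall>v\<in>V. (\<Sum>w\<in>out_nbrs E v. x (v, w)) = 1 \<and> (\<Sum>w\<in>in_nbrs E v. x (w, v)) = 1)"

definition b_normal :: "real \<Rightarrow> 'a set \<Rightarrow> ('a \<times> 'a) set \<Rightarrow> ('a \<times> 'a \<Rightarrow> real) \<Rightarrow> bool" where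
  "b_normal b V E x \<longleftrightarrow>
     (\<forall>e\<in>E. 1 / (b * real (card V)) \<le> x e \<and> x e \<le> b / real (card V))"

definition ent :: "('a \<times> 'a) set \<Rightarrow> ('a \<times> 'a \<Rightarrow> real) \<Rightarrow> real" where
  "ent E x = (\<Sum>e\<in>E. x e * log 2 (1 / x e))"

definition ent_out :: "('a \<times> 'a) set \<Rightarrow> ('a \<times> 'a \<Rightarrow> real) \<Rightarrow> 'a \<Rightarrow> real" where
  "ent_out E x v = (\<Sum>w\<in>out_nbrs E v. x (v, w) * log 2 (1 / x (v, w)))"

definition ent_in :: "('a \<times> 'a) set \<Rightarrow> ('a \<times> 'a \<Rightarrow> real) \<Rightarrow> 'a \<Rightarrow> real" where
  "ent_in E x v = (\<Sum>w\<in>in_nbrs E v. x (w, v) * log 2 (1 / x (w, v)))"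

definition approx_eq :: "real \<Rightarrow> real \<Rightarrow> real \<Rightarrow> bool" where
  "approx_eq a \<beta> c \<longleftrightarrow> \<beta> - c \<le> a \<and> a \<le> \<beta> + c"

end

theory Submission
  imports Defs "HOL-Real_Asymp.Real_Asymp"
begin

lemma s_facts:
  fixes \<epsilon> b \<gamma> :: real
  assumes "\<epsilon> > 0" "b \<ge> 2" "\<gamma> > 0"
  shows "\<forall>\<^sub>F s in at_top. 1 \<le> s \<and> 100*\<gamma> \<le> s \<and> 16*exp(s/24) \<le> exp(s/18) \<and>
     4*(ln b + s^2 + 2)*exp(s/24) \<le> exp(s/22) \<and>
     32*b/exp(s/18) + 64*b/exp(s^2/4) \<le> \<epsilon>/exp(s/22)"
proof -
  have f1: "filterlim (\<lambda>s::real. exp(s/72)) at_top at_top" by real_asymp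
  have e1: "\<forall>\<^sub>F s in at_top. 16 \<le> exp(s/72::real)"
    using f1 by (simp add: filterlim_at_top)
  have t2: "((\<lambda>s::real. 4*(ln b + s^2 + 2)*exp(-s/264)) \<longlongrightarrow> 0) at_top" by real_asymp
  have e2: "\<forall>\<^sub>F s in at_top. 4*(ln b + s^2 + 2)*exp(-s/264) < 1"
    using order_tendstoD(2)[OF t2] by simp
  have t3: "((\<lambda>s::real. 32*b*exp(-s/99) + 64*b*exp(-(s^2)/4 + s/22)) \<longlongrightarrow> 0) at_top" by real_asymp
  have e3: "\<forall>\<^sub>F s in at_top. 32*b*exp(-s/99) + 64*b*exp(-(s^2)/4 + s/22) < \<epsilon>"
    using order_tendstoD(2)[OF t3 assms(1)] by simp
  have e4: "\<forall>\<^sub>F s in at_top. max 1 (100*\<gamma>) \<le> (s::real)" by (rule eventually_ge_at_top)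
  show ?thesis
  using e1 e2 e3 e4
  proof eventually_elim
    case (elim s)
    have a: "exp(s/18) = exp(s/72)*exp(s/24)" by (simp add: exp_add[symmetric])
    have b1: "16*exp(s/24) \<le> exp(s/18)" unfolding a using elim(1) by simp
    have c: "exp(s/22) = exp(s/264)*exp(s/24)" by (simp add: exp_add[symmetric])
    have c2: "4*(ln b + s^2 + 2) = (4*(ln b + s^2 + 2)*exp(-s/264)) * exp(s/264)"
      by (simp add: exp_minus field_simps)
    have c3: "4*(ln b + s^2 + 2) \<le> exp(s/264)"
    proof -
      have "4*(ln b + s^2 + 2)*exp(-s/264) * exp(s/264) \<le> 1 * exp(s/264)"
        using elim(2) by (intro mult_right_mono) auto
      then show ?thesis by (simp add: mult.assoc exp_minus)
    qed
    have b2: "4*(ln b + s^2 + 2)*exp(s/24) \<le> exp(s/22)" unfolding c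
      using c3 by (simp add: mult_right_mono)
    have d1: "32*b/exp(s/18) = 32*b*exp(-s/99) * exp(-s/22)"
      by (simp add: exp_add[symmetric] exp_minus field_simps)
    have d2: "64*b/exp(s^2/4) = 64*b*exp(-(s^2)/4 + s/22) * exp(-s/22)"
      by (simp add: exp_add[symmetric] exp_minus field_simps)
    have b3: "32*b/exp(s/18) + 64*b/exp(s^2/4) \<le> \<epsilon>/exp(s/22)"
    proof -
      have "(32*b*exp(-s/99) + 64*b*exp(-(s^2)/4 + s/22)) * exp(-s/22) \<le> \<epsilon> * exp(-s/22)"
        using elim(3) by (rule mult_right_mono[OF less_imp_le]) simp_all
      moreover have "\<epsilon>/exp(s/22) = \<epsilon> * exp(-s/22)" by (simp add: exp_minus inverse_eq_divide)
      ultimately show ?thesis unfolding d1 d2 by (simp only: distrib_right)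
    qed
    show ?case using b1 b2 b3 elim(4) by (intro conjI) (simp_all only: max.bounded_iff)
  qed
qed

definition mbd :: "nat \<Rightarrow> real" where
  "mbd n = 3 * real n powr (1/100) * real n powr (1/4)"

lemma n_facts:
  fixes \<epsilon> b \<gamma> :: real
  assumes "\<epsilon> > 0" "b \<ge> 2" "\<gamma> > 0"
  shows "\<forall>\<^sub>F n in sequentially. max 3 (4*b) \<le> real n \<and>
     mbd n + 2 < \<epsilon> * real n \<and> 2 * mbd n < real n \<and>
     8*(2*real n + (mbd n)^2)*(ln b + ln (real n)) < ln 2 * real n * real n powr (1/8) \<and>
     16 * (mbd n)^2 < real n * real n powr (1/8) \<and>
     (let s = sqrt (ln (real n)) in 1 \<le> s \<and> 100*\<gamma> \<le> s \<and> 16*exp(s/24) \<le> exp(s/18) \<and>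
     4*(ln b + s^2 + 2)*exp(s/24) \<le> exp(s/22) \<and>
     32*b/exp(s/18) + 64*b/exp(s^2/4) \<le> \<epsilon>/exp(s/22))"
proof -
  have fs: "filterlim (\<lambda>n. sqrt (ln (real n))) at_top sequentially" by real_asymp
  have E1: "\<forall>\<^sub>F n in sequentially. (let s = sqrt (ln (real n)) in 1 \<le> s \<and> 100*\<gamma> \<le> s \<and> 16*exp(s/24) \<le> exp(s/18) \<and>
     4*(ln b + s^2 + 2)*exp(s/24) \<le> exp(s/22) \<and>
     32*b/exp(s/18) + 64*b/exp(s^2/4) \<le> \<epsilon>/exp(s/22))"
    using fs s_facts[OF assms] unfolding filterlim_iff Let_def by blast
  have E2: "\<forall>\<^sub>F n in sequentially. max 3 (4*b) \<le> real n"
    using filterlim_real_sequentially unfolding filterlim_at_top by blast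
  have t3: "(\<lambda>n. (mbd n + 2) / real n) \<longlonglongrightarrow> 0" unfolding mbd_def by real_asymp
  have E3: "\<forall>\<^sub>F n in sequentially. (mbd n + 2) / real n < \<epsilon>" using order_tendstoD(2)[OF t3 assms(1)] .
  have t4: "(\<lambda>n. 2 * mbd n / real n) \<longlonglongrightarrow> 0" unfolding mbd_def by real_asymp
  have E4: "\<forall>\<^sub>F n in sequentially. 2 * mbd n / real n < 1" using order_tendstoD(2)[OF t4] by simp
  have t5: "(\<lambda>n. 8*(2*real n + (mbd n)^2)*(ln b + ln (real n)) / (ln 2 * real n * real n powr (1/8))) \<longlonglongrightarrow> 0"
    unfolding mbd_def by real_asymp
  have E5: "\<forall>\<^sub>F n in sequentially. 8*(2*real n + (mbd n)^2)*(ln b + ln (real n)) / (ln 2 * real n * real n powr (1/8)) < 1"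
    using order_tendstoD(2)[OF t5] by simp
  have t6: "(\<lambda>n. 16 * (mbd n)^2 / (real n * real n powr (1/8))) \<longlonglongrightarrow> 0"
    unfolding mbd_def by real_asymp
  have E6: "\<forall>\<^sub>F n in sequentially. 16 * (mbd n)^2 / (real n * real n powr (1/8)) < 1"
    using order_tendstoD(2)[OF t6] by simp
  show ?thesis using E1 E2 E3 E4 E5 E6
  proof eventually_elim
    case (elim n)
    have np: "real n > 0" using elim(2) by simp
    have p8: "ln 2 * real n * real n powr (1/8) > 0" using np by simp
    have p8': "real n * real n powr (1/8) > 0" using np by simp
    have "mbd n + 2 < \<epsilon> * real n" using elim(3) np by (simp add: divide_less_eq)
    moreover have "2 * mbd n < real n" using elim(4) np by (simp add: divide_less_eq)
    moreover have "8*(2*real n + (mbd n)^2)*(ln b + ln (real n)) < ln 2 * real n * real n powr (1/8)"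
      using elim(5) p8 by (simp only: divide_less_eq) simp
    moreover have "16 * (mbd n)^2 < real n * real n powr (1/8)"
      using elim(6) p8' by (simp only: divide_less_eq) simp
    ultimately show ?case using elim(1) elim(2) by blast
  qed
qed


definition e1f :: "nat \<Rightarrow> real" where
  "e1f n = real n powr (-3/4 - 1 / (18 * sqrt (ln (real n))))"
definition dlf :: "nat \<Rightarrow> real" where
  "dlf n = real n powr (-3/4 - 1 / (22 * sqrt (ln (real n))))"
definition Pf :: "nat \<Rightarrow> real" where
  "Pf n = real n powr (1/4 - 1 / (24 * sqrt (ln (real n))))"

lemma num_facts:
  fixes \<epsilon> b \<gamma> s :: real and n :: nat
  assumes n3: "3 \<le> real n" and sdef: "s = sqrt (ln (real n))"
    and S1: "1 \<le> s" and S2: "100*\<gamma> \<le> s" and S3: "16*exp(s/24) \<le> exp(s/18)"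
    and S4: "4*(ln b + s^2 + 2)*exp(s/24) \<le> exp(s/22)"
    and S5: "32*b/exp(s/18) + 64*b/exp(s^2/4) \<le> \<epsilon>/exp(s/22)"
    and b2: "b \<ge> 2" and g: "\<gamma> > 0" and ep: "\<epsilon> > 0"
  shows "exp(\<gamma> * s) \<le> real n powr (1/100)" "0 < dlf n" "dlf n \<le> 1" "0 \<le> e1f n"
    "32*b*e1f n + 64*b/real n \<le> \<epsilon> * dlf n"
    "4*real n*e1f n \<le> Pf n / 4"
    "real n * dlf n * (ln (b * real n) + 2) \<le> Pf n / 4"
    "real n powr (1/8) \<le> Pf n"
proof -
  have np: "real n > 0" using n3 by simp
  have lnp: "ln (real n) > 0" using n3 by simp
  have s2: "s^2 = ln (real n)" using sdef lnp by simp
  have sp: "s > 0" using S1 by simp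
  have pw: "real n powr c = exp (c * s^2)" for c
    using np s2 by (simp add: powr_def)
  have nexp: "real n = exp (s^2)" using np s2 by simp
  have ps: "real n powr (a - 1 / (k * s)) = exp (a * s^2) / exp (s / k)" if "k > 0" for a k
  proof -
    have "real n powr (a - 1 / (k * s)) = exp ((a - 1/(k*s)) * s^2)" by (rule pw)
    also have "(a - 1/(k*s)) * s^2 = a * s^2 - s / k" using sp that by (simp add: field_simps power2_eq_square)
    finally show ?thesis by (simp add: exp_diff)
  qed
  have e1: "e1f n = exp (-3/4 * s^2) / exp (s/18)"
    unfolding e1f_def sdef[symmetric] using ps[of 18 "-3/4"] by simp
  have dl: "dlf n = exp (-3/4 * s^2) / exp (s/22)"
    unfolding dlf_def sdef[symmetric] using ps[of 22 "-3/4"] by simp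
  have P: "Pf n = exp (1/4 * s^2) / exp (s/24)"
    unfolding Pf_def sdef[symmetric] using ps[of 24 "1/4"] by simp
  show "exp(\<gamma> * s) \<le> real n powr (1/100)"
  proof -
    have "\<gamma> * s \<le> 1/100 * s^2" using S2 sp by (simp add: power2_eq_square mult_right_mono)
    then show ?thesis unfolding pw by simp
  qed
  show "0 < dlf n" unfolding dl by simp
  show "dlf n \<le> 1"
  proof -
    have "exp (-3/4 * s^2) \<le> 1" by simp
    moreover have "1 \<le> exp (s/22)" using sp by simp
    ultimately have "exp (-3/4 * s^2) / exp (s/22) \<le> 1 / 1"
      by (intro frac_le) auto
    then show ?thesis unfolding dl by simp
  qed
  show "0 \<le> e1f n" unfolding e1 by simp
  show "32*b*e1f n + 64*b/real n \<le> \<epsilon> * dlf n"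
  proof -
    have a: "32*b*e1f n + 64*b/real n = exp (-3/4 * s^2) * (32*b/exp(s/18) + 64*b/exp(s^2/4))"
    proof -
      have "exp (-3/4 * s^2) / exp(s^2/4) = 1 / exp (s^2)"
      proof -
        have "exp (3/4 * s^2) * exp (s^2/4) = exp (s^2)" by (simp add: exp_add[symmetric])
        then show ?thesis by (simp add: exp_minus field_simps)
      qed
      then have q: "exp (-3/4 * s^2) / exp(s^2/4) = 1 / real n" using nexp by simp
      have "exp (-3/4 * s^2) * (32*b/exp(s/18) + 64*b/exp(s^2/4)) =
          32*b*(exp (-3/4 * s^2) / exp(s/18)) + 64*b*(exp (-3/4 * s^2) / exp(s^2/4))"
        by (simp add: distrib_left mult.commute)
      also have "\<dots> = 32*b*e1f n + 64*b/real n" unfolding q e1 by simp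
      finally show ?thesis by simp
    qed
    have "exp (-3/4 * s^2) * (32*b/exp(s/18) + 64*b/exp(s^2/4)) \<le> exp (-3/4 * s^2) * (\<epsilon>/exp(s/22))"
      using S5 by (rule mult_left_mono) simp
    then show ?thesis unfolding a dl by (simp add: mult.commute)
  qed
  have Y: "real n * exp (-3/4 * s^2) = exp (1/4 * s^2)" unfolding nexp by (simp add: exp_add[symmetric])
  show "4*real n*e1f n \<le> Pf n / 4"
  proof -
    have "4*real n*e1f n = 4 * exp (1/4 * s^2) / exp (s/18)" unfolding e1 using Y by (simp add: field_simps)
    also have "\<dots> \<le> exp (1/4 * s^2) / (4 * exp (s/24))"
      using mult_left_mono[OF S3, of "exp (1/4 * s^2)"] by (simp add: field_simps)
    finally show ?thesis unfolding P by simp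
  qed
  show "real n * dlf n * (ln (b * real n) + 2) \<le> Pf n / 4"
  proof -
    have lb: "ln (b * real n) = ln b + s^2" using b2 np s2 by (simp add: ln_mult)
    have "real n * dlf n * (ln (b * real n) + 2) = exp (1/4 * s^2) * (ln b + s^2 + 2) / exp (s/22)"
      unfolding dl lb using Y by (simp add: field_simps)
    also have "\<dots> \<le> exp (1/4 * s^2) / (4 * exp (s/24))"
      using mult_left_mono[OF S4, of "exp (1/4 * s^2)"] by (simp add: field_simps)
    finally show ?thesis unfolding P by simp
  qed
  show "real n powr (1/8) \<le> Pf n"
  proof -
    have "s/24 \<le> s^2/8" using S1 sp by (simp add: power2_eq_square)
    then have "exp (s/24) \<le> exp (s^2/8)" by simp
    then have "exp (1/8 * s^2) \<le> exp (1/4 * s^2) / exp (s/24)"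
      by (simp add: field_simps exp_add[symmetric])
    then show ?thesis unfolding P pw .
  qed
qed

lemma out_eq: "E \<subseteq> V \<times> V \<Longrightarrow> out_nbrs E v = {w\<in>V. (v,w)\<in>E}"
  by (auto simp: out_nbrs_def)
lemma in_eq: "E \<subseteq> V \<times> V \<Longrightarrow> in_nbrs E w = {v\<in>V. (v,w)\<in>E}"
  by (auto simp: in_nbrs_def)

lemma sum_edges_out:
  assumes "finite V" "E \<subseteq> V \<times> V"
  shows "(\<Sum>e\<in>E. g e) = (\<Sum>v\<in>V. \<Sum>w\<in>out_nbrs E v. g (v,w))"
proof -
  have E: "E = Sigma V (out_nbrs E)" using assms(2) by (auto simp: out_nbrs_def)
  have fin: "\<forall>v\<in>V. finite (out_nbrs E v)"
    using assms(1) by (auto simp: out_eq[OF assms(2)])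
  have "(\<Sum>v\<in>V. \<Sum>w\<in>out_nbrs E v. g (v,w)) = (\<Sum>(v,w)\<in>Sigma V (out_nbrs E). g (v,w))"
    by (rule sum.Sigma[OF assms(1) fin])
  also have "\<dots> = (\<Sum>e\<in>Sigma V (out_nbrs E). g e)" by (simp add: case_prod_beta')
  finally show ?thesis by (simp only: E[symmetric])
qed

lemma sum_swap_in_out:
  assumes "finite V" "E \<subseteq> V \<times> V"
  shows "(\<Sum>w\<in>V. \<Sum>v\<in>in_nbrs E w. g (v,w)) = (\<Sum>v\<in>V. \<Sum>w\<in>out_nbrs E v. g (v,w))"
proof -
  have "(\<Sum>w\<in>V. \<Sum>v\<in>in_nbrs E w. g (v,w)) = (\<Sum>w\<in>V. \<Sum>v\<in>V. if (v,w)\<in>E then g (v,w) else 0)"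
    using assms(1) by (simp add: in_eq[OF assms(2)] sum.inter_filter)
  also have "\<dots> = (\<Sum>v\<in>V. \<Sum>w\<in>V. if (v,w)\<in>E then g (v,w) else 0)"
    by (rule sum.swap)
  also have "\<dots> = (\<Sum>v\<in>V. \<Sum>w\<in>out_nbrs E v. g (v,w))"
    using assms(1) by (simp add: out_eq[OF assms(2)] sum.inter_filter)
  finally show ?thesis .
qed

lemma sum_edges_in:
  assumes "finite V" "E \<subseteq> V \<times> V"
  shows "(\<Sum>e\<in>E. g e) = (\<Sum>w\<in>V. \<Sum>v\<in>in_nbrs E w. g (v,w))"
  using sum_edges_out[OF assms, of g] sum_swap_in_out[OF assms, of g] by simp

lemma antisym_sum:
  fixes f :: "'a \<Rightarrow> 'a \<Rightarrow> real"
  assumes "\<And>a b. f a b = - f b a"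
  shows "(\<Sum>a\<in>A. \<Sum>b\<in>A. f a b) = 0"
proof -
  have "(\<Sum>a\<in>A. \<Sum>b\<in>A. f a b) = (\<Sum>b\<in>A. \<Sum>a\<in>A. f a b)" by (rule sum.swap)
  also have "\<dots> = (\<Sum>b\<in>A. \<Sum>a\<in>A. - f b a)" by (intro sum.cong refl) (rule assms)
  also have "\<dots> = - (\<Sum>b\<in>A. \<Sum>a\<in>A. f b a)" by (simp add: sum_negf)
  finally show ?thesis by simp
qed

lemma correction:
  fixes W :: "'a set" and E :: "('a \<times> 'a) set" and y :: "'a \<times> 'a \<Rightarrow> real" and D K \<rho> :: real
  assumes fin: "finite W" and EW: "E \<subseteq> W \<times> W" and Dp: "D > 0" and Kp: "K > 0"
    and deg: "\<forall>v\<in>W. D \<le> real (card (out_nbrs E v))"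
    and com: "\<forall>w\<in>W. \<forall>w'\<in>W. K \<le> real (card (in_nbrs E w \<inter> in_nbrs E w'))"
    and rows: "\<forall>v\<in>W. \<bar>1 - (\<Sum>w\<in>out_nbrs E v. y (v,w))\<bar> \<le> \<rho>"
    and cols: "\<forall>w\<in>W. \<bar>1 - (\<Sum>v\<in>in_nbrs E w. y (v,w))\<bar> \<le> \<rho>"
  shows "\<exists>z. (\<forall>v\<in>W. (\<Sum>w\<in>out_nbrs E v. z (v,w)) = 1 \<and> (\<Sum>w\<in>in_nbrs E v. z (w,v)) = 1) \<and>
             (\<forall>e\<in>E. \<bar>z e - y e\<bar> \<le> \<rho>/D + 2*(\<rho> + real (card W)*\<rho>/D)/K)"
proof -
  have outW: "out_nbrs E v \<subseteq> W" for v using EW by (auto simp: out_nbrs_def)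
  have inW: "in_nbrs E v \<subseteq> W" for v using EW by (auto simp: in_nbrs_def)
  have fout: "finite (out_nbrs E v)" for v using outW fin by (rule finite_subset)
  have fin_in: "finite (in_nbrs E v)" for v using inW fin by (rule finite_subset)
  define r where "r v = 1 - (\<Sum>w\<in>out_nbrs E v. y (v,w))" for v
  define c1 where "c1 v = r v / real (card (out_nbrs E v))" for v
  define y1 where "y1 e = y e + c1 (fst e)" for e
  have row1: "(\<Sum>w\<in>out_nbrs E v. y1 (v,w)) = 1" if "v \<in> W" for v
  proof -
    have cp: "real (card (out_nbrs E v)) > 0" using deg that Dp by force
    have "(\<Sum>w\<in>out_nbrs E v. y1 (v,w)) = (\<Sum>w\<in>out_nbrs E v. y (v,w)) + real (card (out_nbrs E v)) * c1 v"
      by (simp add: y1_def sum.distrib)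
    also have "\<dots> = 1" using cp by (simp add: c1_def r_def)
    finally show ?thesis .
  qed
  have c1b: "\<bar>c1 v\<bar> \<le> \<rho>/D" if "v \<in> W" for v
  proof -
    have cp: "D \<le> real (card (out_nbrs E v))" using deg that by blast
    have rb: "\<bar>r v\<bar> \<le> \<rho>" using rows that by (simp add: r_def)
    have "\<bar>c1 v\<bar> = \<bar>r v\<bar> / real (card (out_nbrs E v))" by (simp add: c1_def)
    also have "\<dots> \<le> \<rho> / real (card (out_nbrs E v))" using rb cp Dp by (simp add: divide_right_mono)
    also have "\<dots> \<le> \<rho> / D" using cp Dp rb by (intro divide_left_mono) auto
    finally show ?thesis .
  qed
  define q where "q w = 1 - (\<Sum>v\<in>in_nbrs E w. y1 (v,w))" for w
  have qsum: "(\<Sum>w\<in>W. q w) = 0"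
  proof -
    have "(\<Sum>w\<in>W. q w) = real (card W) - (\<Sum>w\<in>W. \<Sum>v\<in>in_nbrs E w. y1 (v,w))"
      by (simp add: q_def sum_subtractf)
    also have "(\<Sum>w\<in>W. \<Sum>v\<in>in_nbrs E w. y1 (v,w)) = (\<Sum>v\<in>W. \<Sum>w\<in>out_nbrs E v. y1 (v,w))"
      by (rule sum_swap_in_out[OF fin EW])
    also have "\<dots> = (\<Sum>v\<in>W. 1)" using row1 by simp
    finally show ?thesis by simp
  qed
  define Q where "Q = \<rho> + real (card W)*\<rho>/D"
  have qb: "\<bar>q w\<bar> \<le> Q" if "w \<in> W" for w
  proof -
    have qe: "q w = (1 - (\<Sum>v\<in>in_nbrs E w. y (v,w))) - (\<Sum>v\<in>in_nbrs E w. c1 v)"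
      by (simp add: q_def y1_def sum.distrib)
    have "\<bar>\<Sum>v\<in>in_nbrs E w. c1 v\<bar> \<le> (\<Sum>v\<in>in_nbrs E w. \<bar>c1 v\<bar>)" by (rule sum_abs)
    also have "\<dots> \<le> (\<Sum>v\<in>in_nbrs E w. \<rho>/D)" using c1b inW by (intro sum_mono) auto
    also have "\<dots> = real (card (in_nbrs E w)) * (\<rho>/D)" by simp
    also have "\<dots> \<le> real (card W) * (\<rho>/D)"
    proof (rule mult_right_mono)
      show "real (card (in_nbrs E w)) \<le> real (card W)" using card_mono[OF fin inW] by simp
      have "0 \<le> \<rho>" using rows that by force
      then show "0 \<le> \<rho>/D" using Dp by simp
    qed
    finally have "\<bar>\<Sum>v\<in>in_nbrs E w. c1 v\<bar> \<le> real (card W) * \<rho>/D" by simp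
    moreover have "\<bar>1 - (\<Sum>v\<in>in_nbrs E w. y (v,w))\<bar> \<le> \<rho>" using cols that by blast
    ultimately show ?thesis unfolding qe Q_def by linarith
  qed
  define C where "C w w' = in_nbrs E w \<inter> in_nbrs E w'" for w w'
  define g where "g v w w' = (if v \<in> C w w' then (q w - q w') / (real (card W) * real (card (C w w'))) else 0)" for v w w'
  define c2 where "c2 v w = (\<Sum>w'\<in>W. g v w w')" for v w
  define z where "z e = y1 e + c2 (fst e) (snd e)" for e
  have row2: "(\<Sum>w\<in>out_nbrs E v. c2 v w) = 0" if "v \<in> W" for v
  proof -
    have "(\<Sum>w\<in>out_nbrs E v. c2 v w) = (\<Sum>w\<in>W. c2 v w)"
    proof (rule sum.mono_neutral_left[OF fin outW], rule ballI)
      fix w assume "w \<in> W - out_nbrs E v"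
      then have "v \<notin> C w w'" for w' by (auto simp: C_def in_nbrs_def out_nbrs_def)
      then show "c2 v w = 0" by (simp add: c2_def g_def)
    qed
    also have "\<dots> = 0" unfolding c2_def
      by (rule antisym_sum) (auto simp: g_def C_def Int_commute minus_divide_left)
    finally show ?thesis .
  qed
  have col2: "(\<Sum>v\<in>in_nbrs E w. c2 v w) = q w" if "w \<in> W" for w
  proof -
    have Wp: "real (card W) > 0" using that fin card_gt_0_iff by fastforce
    have inner: "(\<Sum>v\<in>in_nbrs E w. g v w w') = (q w - q w') / real (card W)" if "w' \<in> W" for w'
    proof -
      have Cp: "real (card (C w w')) > 0" using com that \<open>w\<in>W\<close> Kp unfolding C_def by force
      have "(\<Sum>v\<in>in_nbrs E w. g v w w') = (\<Sum>v\<in>{v\<in>in_nbrs E w. v \<in> C w w'}. (q w - q w') / (real (card W) * real (card (C w w'))))"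
        unfolding g_def by (rule sum.inter_filter[OF fin_in, symmetric])
      also have "{v\<in>in_nbrs E w. v \<in> C w w'} = C w w'" by (auto simp: C_def)
      finally show ?thesis using Cp by simp
    qed
    have "(\<Sum>v\<in>in_nbrs E w. c2 v w) = (\<Sum>w'\<in>W. \<Sum>v\<in>in_nbrs E w. g v w w')"
      unfolding c2_def by (rule sum.swap)
    also have "\<dots> = (\<Sum>w'\<in>W. (q w - q w') / real (card W))" using inner by simp
    also have "\<dots> = (real (card W) * q w - (\<Sum>w'\<in>W. q w')) / real (card W)"
      by (simp add: sum_divide_distrib[symmetric] sum_subtractf)
    also have "\<dots> = q w" using qsum Wp by simp
    finally show ?thesis .
  qed
  have gb: "\<bar>g v w w'\<bar> \<le> 2*Q / (real (card W) * K)" if "w \<in> W" "w' \<in> W" for v w w'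
  proof (cases "v \<in> C w w'")
    case True
    have Cp: "K \<le> real (card (C w w'))" using com that unfolding C_def by blast
    have Wp: "real (card W) > 0" using that fin card_gt_0_iff by fastforce
    have "\<bar>q w - q w'\<bar> \<le> 2*Q" using qb[OF that(1)] qb[OF that(2)] by linarith
    then have "\<bar>g v w w'\<bar> \<le> 2*Q / (real (card W) * real (card (C w w')))"
      using True Cp Kp Wp by (simp add: g_def abs_div divide_right_mono)
    also have "\<dots> \<le> 2*Q / (real (card W) * K)"
    proof (rule divide_left_mono)
      show "0 \<le> 2*Q" using \<open>\<bar>q w - q w'\<bar> \<le> 2*Q\<close> by linarith
      show "real (card W) * K \<le> real (card W) * real (card (C w w'))" using Cp Wp by simp
      show "0 < real (card W) * real (card (C w w')) * (real (card W) * K)" using Cp Wp Kp by simp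
    qed
    finally show ?thesis .
  next
    case False
    have "0 \<le> Q" using qb[OF that(1)] by linarith
    then show ?thesis using False Kp by (simp add: g_def)
  qed
  show ?thesis
  proof (intro exI conjI ballI)
    fix v assume v: "v \<in> W"
    show "(\<Sum>w\<in>out_nbrs E v. z (v,w)) = 1"
      using row1[OF v] row2[OF v] by (simp add: z_def sum.distrib)
    show "(\<Sum>w\<in>in_nbrs E v. z (w,v)) = 1"
      using col2[OF v] by (simp add: z_def sum.distrib q_def)
  next
    fix e assume e: "e \<in> E"
    obtain v w where vw: "e = (v,w)" by (cases e)
    have vW: "v \<in> W" and wW: "w \<in> W" using e EW vw by auto
    have Wp: "real (card W) > 0" using vW fin card_gt_0_iff by fastforce
    have "\<bar>c2 v w\<bar> \<le> (\<Sum>w'\<in>W. \<bar>g v w w'\<bar>)" unfolding c2_def by (rule sum_abs)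
    also have "\<dots> \<le> (\<Sum>w'\<in>W. 2*Q / (real (card W) * K))" using gb wW by (intro sum_mono) auto
    also have "\<dots> = 2*Q/K" using Wp by simp
    finally have "\<bar>c2 v w\<bar> \<le> 2*Q/K" .
    moreover have "z e - y e = c1 v + c2 v w" by (simp add: z_def y1_def vw)
    ultimately show "\<bar>z e - y e\<bar> \<le> \<rho>/D + 2*(\<rho> + real (card W)*\<rho>/D)/K"
      using c1b[OF vW] unfolding Q_def by linarith
  qed
qed

lemma ln2_half: "1/2 \<le> ln (2::real)"
proof -
  have "ln (1/2::real) \<le> 1/2 - 1" by (rule ln_le_minus_one) simp
  then show ?thesis by (simp add: ln_div)
qed

lemma row_arith:
  fixes n m \<sigma> t e1 :: real
  assumes n: "n > 0" and m: "0 \<le> m" "2*m \<le> n"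
    and s1: "(m+1)/n - e1 \<le> \<sigma>" and s2: "\<sigma> \<le> (m+1)/n + e1"
    and t: "0 \<le> t" "t \<le> 2/n"
  shows "\<bar>1 - (n/(n-m) * (1-\<sigma>) + t)\<bar> \<le> 2*e1 + 4/n"
proof -
  define N where "N = n - m"
  have N: "N > 0" "n \<le> 2*N" using n m by (auto simp: N_def)
  have a: "1 - n/N * (1-\<sigma>) = (n*\<sigma> - m)/N" using N by (simp add: field_simps N_def)
  have b1: "n*\<sigma> \<le> m + 1 + n*e1" using s2 n by (simp add: field_simps)
  have b2: "m + 1 - n*e1 \<le> n*\<sigma>" using s1 n by (simp add: field_simps)
  have e1p: "0 \<le> e1" using s1 s2 by linarith
  have c: "\<bar>n*\<sigma> - m\<bar> \<le> 1 + n*e1" using b1 b2 e1p n by (simp add: abs_le_iff)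
  have "\<bar>(n*\<sigma> - m)/N\<bar> \<le> (1 + n*e1)/N" using c N by (simp add: abs_div divide_right_mono)
  also have "\<dots> \<le> (1 + n*e1)/(n/2)"
    using N n e1p by (intro divide_left_mono) (auto simp: mult_pos_pos)
  also have "\<dots> = 2/n + 2*e1" using n by (simp add: field_simps)
  finally have d: "\<bar>1 - n/N * (1-\<sigma>)\<bar> \<le> 2/n + 2*e1" unfolding a .
  have "\<bar>1 - (n/N * (1-\<sigma>) + t)\<bar> \<le> \<bar>1 - n/N * (1-\<sigma>)\<bar> + t" using t by (simp add: abs_le_iff abs_if)
  also have "\<dots> \<le> (2/n + 2*e1) + 2/n" using d t by (intro add_mono)
  also have "\<dots> = 2*e1 + 4/n" by simp
  finally show ?thesis unfolding N_def .
qed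

lemma cb_arith:
  fixes n N \<rho> \<epsilon> b \<delta> :: real
  assumes n: "n > 0" "N > 0" "N \<le> n" and \<rho>: "0 \<le> \<rho>" and e: "0 < \<epsilon>" "\<epsilon> \<le> 1" and b: "b > 0"
    and key: "16*b*\<rho> \<le> \<epsilon>*\<delta>"
  shows "\<rho>/(n/2) + 2*(\<rho> + N*\<rho>/(n/2))/(\<epsilon>*n) \<le> \<delta>/(2*b*N)"
proof -
  have "N*\<rho> \<le> n*\<rho>" using n \<rho> by (intro mult_right_mono) auto
  then have a: "N*\<rho>/(n/2) \<le> 2*\<rho>" using n by (simp add: field_simps)
  have "\<epsilon>*\<rho> \<le> 1*\<rho>" using e \<rho> by (intro mult_right_mono) auto
  then have b1: "\<rho>/(n/2) \<le> 2*\<rho>/(\<epsilon>*n)" using n \<rho> e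
    by (simp add: field_simps)
  have b2: "2*(\<rho> + N*\<rho>/(n/2))/(\<epsilon>*n) \<le> 2*(3*\<rho>)/(\<epsilon>*n)"
    using a n e by (intro divide_right_mono) auto
  have "\<rho>/(n/2) + 2*(\<rho> + N*\<rho>/(n/2))/(\<epsilon>*n) \<le> 8*\<rho>/(\<epsilon>*n)" using b1 b2 by (simp add: field_simps)
  also have "\<dots> \<le> \<delta>/(2*b*n)" using key n e b by (simp add: field_simps)
  also have "\<dots> \<le> \<delta>/(2*b*N)"
  proof -
    have "0 \<le> \<delta>" using key e b \<rho> by (smt (verit) mult_nonneg_nonneg zero_le_mult_iff)
    then show ?thesis using n b by (intro divide_left_mono) auto
  qed
  finally show ?thesis .
qed

lemma norm_arith:
  fixes b N \<delta> y z :: real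
  assumes b: "b \<ge> 2" and N: "N > 0" and d: "0 < \<delta>" "\<delta> \<le> 1"
    and y: "1/(b*N) \<le> y" "y \<le> b/N" and zy: "\<bar>z - y\<bar> \<le> \<delta>/(2*b*N)"
  shows "1/((1+\<delta>)*b*N) \<le> z" "z \<le> (1+\<delta>)*b/N"
proof -
  have bN: "b*N > 0" using b N by simp
  have "1/((1+\<delta>)*b*N) = (1/(1+\<delta>)) * (1/(b*N))" by simp
  also have "1/(1+\<delta>) \<le> 1 - \<delta>/2" using d by (simp add: field_simps)
  then have "(1/(1+\<delta>)) * (1/(b*N)) \<le> (1 - \<delta>/2) * (1/(b*N))" using bN by (intro mult_right_mono) auto
  also have "\<dots> = 1/(b*N) - \<delta>/(2*b*N)" by (simp add: diff_divide_distrib)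
  also have "\<dots> \<le> z" using y zy by linarith
  finally show "1/((1+\<delta>)*b*N) \<le> z" .
  have "1 \<le> b * (b * 2)" using b by (smt (verit) mult_le_cancel_left1)
  then have "\<delta>/(2*b*N) \<le> \<delta>*b/N" using b N d by (simp add: field_simps)
  then have "z \<le> b/N + \<delta>*b/N" using y zy by linarith
  also have "\<dots> = (1+\<delta>)*b/N" by (simp add: add_divide_distrib distrib_right)
  finally show "z \<le> (1+\<delta>)*b/N" .
qed

lemma ent_pert:
  fixes y z B :: real
  assumes y: "0 < y" "y \<le> 1" "1/y \<le> B" and zy: "\<bar>z - y\<bar> \<le> y/2"
  shows "y * log 2 (1/y) - \<bar>z - y\<bar> * (ln B + 2) / ln 2 \<le> z * log 2 (1/z)"
proof -
  have z: "z > 0" "z \<le> 2*y" using zy y by linarith+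
  have l1: "ln (z/y) \<le> z/y - 1" using z y by (intro ln_le_minus_one) simp
  have l2: "ln (1/z) = ln (1/y) - ln (z/y)" using z y by (simp add: ln_div)
  have l3: "0 \<le> ln (1/y)" using y by simp
  have Bp: "0 < B" using y by (smt (verit) divide_pos_pos)
  have l4: "ln (1/y) \<le> ln B" using y Bp by (subst ln_le_cancel_iff) auto
  have A: "z * ln (1/z) \<ge> z * ln (1/y) - z * (z/y - 1)"
  proof -
    have "z * ln (z/y) \<le> z * (z/y - 1)" using l1 z by (intro mult_left_mono) auto
    then show ?thesis unfolding l2 by (simp add: right_diff_distrib)
  qed
  have B1: "z * ln (1/y) \<ge> y * ln (1/y) - \<bar>z - y\<bar> * ln B"
  proof -
    have "z * ln (1/y) = y * ln (1/y) + (z - y) * ln (1/y)" by (simp add: algebra_simps)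
    moreover have "(z - y) * ln (1/y) \<ge> - (\<bar>z - y\<bar> * ln B)"
    proof -
      have "\<bar>(z - y) * ln (1/y)\<bar> \<le> \<bar>z - y\<bar> * ln B"
        using l3 l4 by (simp add: abs_mult mult_left_mono)
      then show ?thesis by linarith
    qed
    ultimately show ?thesis by linarith
  qed
  have C: "z * (z/y - 1) \<le> 2 * \<bar>z - y\<bar>"
  proof -
    have "z * (z/y - 1) = (z/y) * (z - y)" using y by (simp add: field_simps)
    also have "\<dots> \<le> (z/y) * \<bar>z - y\<bar>" using z y by (intro mult_left_mono) auto
    also have "\<dots> \<le> 2 * \<bar>z - y\<bar>" using z y by (intro mult_right_mono) (auto simp: field_simps)
    finally show ?thesis .
  qed
  have D: "y * ln (1/y) - \<bar>z - y\<bar> * (ln B + 2) \<le> z * ln (1/z)" using A B1 C by (simp add: algebra_simps)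
  have l2p: "ln (2::real) > 0" by simp
  have "y * log 2 (1/y) - \<bar>z - y\<bar> * (ln B + 2) / ln 2 = (y * ln (1/y) - \<bar>z - y\<bar> * (ln B + 2)) / ln 2"
    by (simp add: log_def field_simps)
  also have "\<dots> \<le> z * ln (1/z) / ln 2" using D l2p by (intro divide_right_mono) auto
  also have "\<dots> = z * log 2 (1/z)" by (simp add: log_def)
  finally show ?thesis .
qed


lemma fin_arith:
  fixes n m N h L E0 e1 T :: real
  assumes n: "n > 0" and m: "0 \<le> m" "2*m \<le> n" and N: "N = n - m"
    and h: "h \<le> n*L" and L: "0 \<le> L" and e1: "0 \<le> e1"
    and E0: "(n/N)*(h*(1 - 2*(m+1)/n) - 2*n*e1) - n*log 2 (n/N) - T \<le> E0"
  shows "N/n*h - N*log 2 (n/N) - (2*(2*n + m^2)*L/n + 4*n*e1 + 4*m^2/n + T) \<le> E0"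
proof -
  have Np: "N > 0" "n \<le> 2*N" "N \<le> n" using n m N by auto
  have t1: "(n/N)*(h*(1 - 2*(m+1)/n)) - N/n*h = - ((2*n + m^2)*h/(n*N))"
    using Np n unfolding N by (simp add: field_simps power2_eq_square)
  have t1b: "(2*n + m^2)*h/(n*N) \<le> 2*(2*n + m^2)*L/n"
  proof -
    have a: "0 \<le> 2*n + m^2" using n by simp
    have "(2*n + m^2)*h/(n*N) \<le> (2*n + m^2)*(n*L)/(n*N)"
      using h a Np n by (intro divide_right_mono mult_left_mono) auto
    also have "\<dots> = (2*n + m^2)*L/N" using n by simp
    also have "\<dots> \<le> (2*n + m^2)*L/(n/2)"
      using a L Np n by (intro divide_left_mono) auto
    also have "\<dots> = 2*(2*n + m^2)*L/n" by simp
    finally show ?thesis .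
  qed
  have t2: "(n/N)*(2*n*e1) \<le> 4*n*e1"
  proof -
    have "n/N \<le> 2" using Np by (simp add: field_simps)
    then have "(n/N)*(2*n*e1) \<le> 2*(2*n*e1)" using n e1 by (intro mult_right_mono) auto
    then show ?thesis by simp
  qed
  have t3: "m * log 2 (n/N) \<le> 4*m^2/n"
  proof -
    have r: "n/N > 0" using Np n by simp
    have "ln (n/N) \<le> n/N - 1" using r by (rule ln_le_minus_one)
    also have "n/N - 1 = m/N" using Np unfolding N by (simp add: field_simps)
    finally have a: "ln (n/N) \<le> m/N" .
    have "log 2 (n/N) = ln (n/N) / ln 2" by (simp add: log_def)
    also have "\<dots> \<le> (m/N) / (1/2)"
    proof -
      have "ln (n/N) / ln 2 \<le> (m/N) / ln 2" using a by (intro divide_right_mono) auto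
      also have "\<dots> \<le> (m/N) / (1/2)" using ln2_half m Np by (intro divide_left_mono) auto
      finally show ?thesis .
    qed
    also have "\<dots> \<le> 4*m/n"
    proof -
      have "(m/N) / (1/2) = 2*m/N" by simp
      also have "\<dots> \<le> 2*m/(n/2)" using m Np n by (intro divide_left_mono) auto
      also have "\<dots> = 4*m/n" by simp
      finally show ?thesis .
    qed
    finally have "log 2 (n/N) \<le> 4*m/n" .
    then have "m * log 2 (n/N) \<le> m * (4*m/n)" using m by (intro mult_left_mono) auto
    then show ?thesis by (simp add: power2_eq_square mult.commute mult.left_commute)
  qed
  have t4: "n*log 2 (n/N) - N*log 2 (n/N) = m * log 2 (n/N)" unfolding N by (simp add: algebra_simps)
  have "(n/N)*(h*(1 - 2*(m+1)/n) - 2*n*e1) = (n/N)*(h*(1 - 2*(m+1)/n)) - (n/N)*(2*n*e1)"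
    by (simp add: right_diff_distrib)
  then show ?thesis using E0 t1 t1b t2 t3 t4 by linarith
qed

lemma log_scale:
  fixes a x :: real
  assumes "a > 0" "x > 0"
  shows "(a*x) * log 2 (1/(a*x)) = a * (x * log 2 (1/x) - log 2 a * x)"
proof -
  have e: "log 2 (1/(a*x)) = log 2 (1/x) - log 2 a"
    using assms by (simp add: log_def ln_div ln_mult field_simps)
  show ?thesis unfolding e by (simp add: algebra_simps)
qed

lemma card_diff_ge:
  assumes "finite A" "finite M"
  shows "real (card A) - real (card M) \<le> real (card (A - M))"
proof -
  have "card A \<le> card ((A - M) \<union> M)" using assms by (intro card_mono) auto
  also have "\<dots> \<le> card (A - M) + card M" by (rule card_Un_le)
  finally show ?thesis by linarith
qed


lemma inv_card_bound:
  fixes c n N b :: real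
  assumes "n/2 \<le> c" "c \<le> N" "N \<le> n" "N > 0" "b \<ge> 2"
  shows "1/(b*N) \<le> 1/c \<and> 1/c \<le> b/N"
proof
  have cp: "c > 0" using assms by linarith
  have "1/(b*N) \<le> 1/N" using assms by (simp add: field_simps)
  also have "\<dots> \<le> 1/c" using assms cp by (simp add: field_simps)
  finally show "1/(b*N) \<le> 1/c" .
  have "1/c \<le> 1/(n/2)" using assms cp by (intro divide_left_mono) auto
  also have "\<dots> \<le> 2/N" using assms by (simp add: field_simps)
  also have "\<dots> \<le> b/N" using assms by (simp add: divide_right_mono)
  finally show "1/c \<le> b/N" .
qed

lemma core:
  fixes VF :: "'a set" and EF :: "('a \<times> 'a) set" and VG :: "'a set" and u :: 'a
    and x :: "'a \<times> 'a \<Rightarrow> real" and m n :: nat and M :: "'a set" and b \<epsilon> e1 \<delta> :: real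
  assumes dg: "digraph VF EF" and sub: "VG \<subseteq> VF"
    and G: "n_eps_digraph n \<epsilon> VG (induced_edges EF VG)"
    and uV: "u \<in> VF - VG"
    and pfm: "perfect_frac_matching VG (induced_edges EF VG) x"
    and bnm: "b_normal b VG (induced_edges EF VG) x"
    and MV: "M \<subseteq> VG" and cM: "card M = m + 1"
    and hyp: "\<forall>v\<in>VG.
        approx_eq (\<Sum>w\<in>M \<inter> out_nbrs (induced_edges EF VG) v. x (v, w))
          ((real m + 1) / real n) e1 \<and>
        approx_eq (\<Sum>w\<in>M \<inter> in_nbrs (induced_edges EF VG) v. x (w, v))
          ((real m + 1) / real n) e1 \<and>
        approx_eq (\<Sum>w\<in>M \<inter> out_nbrs (induced_edges EF VG) v. x (v, w) * log 2 (1 / x (v, w)))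
          ((real m + 1) / real n * ent_out (induced_edges EF VG) x v) e1 \<and>
        approx_eq (\<Sum>w\<in>M \<inter> in_nbrs (induced_edges EF VG) v. x (w, v) * log 2 (1 / x (w, v)))
          ((real m + 1) / real n * ent_in (induced_edges EF VG) x v) e1"
    and uo: "real (card (out_nbrs EF u \<inter> VG)) \<ge> (1/2 + \<epsilon>) * real n"
    and ui: "real (card (in_nbrs EF u \<inter> VG)) \<ge> (1/2 + \<epsilon>) * real n"
    and ep: "0 < \<epsilon>" "\<epsilon> \<le> 1" and b2: "2 \<le> b"
    and mn1: "real m + 2 \<le> \<epsilon> * real n" and mn2: "2 * real m \<le> real n" and bn4: "4*b \<le> real n"
    and dp: "0 < \<delta>" "\<delta> \<le> 1" and e1p: "0 \<le> e1" and key: "32*b*e1 + 64*b/real n \<le> \<epsilon>*\<delta>"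
  shows "\<exists>z. perfect_frac_matching ((VG - M) \<union> {u}) (induced_edges EF ((VG - M) \<union> {u})) z \<and>
          b_normal ((1 + \<delta>) * b) ((VG - M) \<union> {u}) (induced_edges EF ((VG - M) \<union> {u})) z \<and>
          ent (induced_edges EF ((VG - M) \<union> {u})) z \<ge>
            (real n - real m) / real n * ent (induced_edges EF VG) x
            - (real n - real m) * log 2 (real n / (real n - real m))
            - (2*(2*real n + (real m)^2)*log 2 (b*real n)/real n + 4*real n*e1 + 4*(real m)^2/real n
               + real n*\<delta>*(ln (b*real n) + 2))"
proof -
  define EG where "EG = induced_edges EF VG"
  define W where "W = (VG - M) \<union> {u}"
  define EH where "EH = induced_edges EF W"
  define W' where "W' = VG - M"
  define EI where "EI = induced_edges EF W'"
  define N where "N = real n - real m"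
  have finG: "finite VG" and cG: "card VG = n"
    and degG: "\<forall>v\<in>VG. (1/2+\<epsilon>)*real n \<le> real (card (out_nbrs EG v)) \<and> (1/2+\<epsilon>)*real n \<le> real (card (in_nbrs EG v))"
    using G unfolding n_eps_digraph_def EG_def by auto
  have noloop: "(v,v) \<notin> EF" for v using dg unfolding digraph_def by auto
  have uG: "u \<notin> VG" using uV by auto
  have np: "real n > 0" using bn4 b2 by linarith
  have "\<epsilon> * real n \<le> real n" using ep np by simp
  then have mn: "m + 2 \<le> n" using mn1 by linarith
  have Np: "N > 0" "real n \<le> 2*N" "N \<le> real n" using mn mn2 unfolding N_def by auto
  have EGsub: "EG \<subseteq> VG \<times> VG" by (auto simp: EG_def induced_edges_def)
  have EHsub: "EH \<subseteq> W \<times> W" by (auto simp: EH_def induced_edges_def)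
  have EIsub: "EI \<subseteq> W' \<times> W'" by (auto simp: EI_def induced_edges_def)
  have finM: "finite M" using MV finG by (rule finite_subset)
  have finW': "finite W'" using finG by (simp add: W'_def)
  have finW: "finite W" using finG by (simp add: W_def)
  have WW': "W = insert u W'" by (auto simp: W_def W'_def)
  have uW': "u \<notin> W'" using uG by (simp add: W'_def)
  have cW': "card W' = n - (m+1)" unfolding W'_def using card_Diff_subset[OF finM MV] cM cG by simp
  have cW: "real (card W) = N" unfolding WW' using finW' uW' cW' mn N_def by simp
  have cW'N: "real (card W') \<le> N" using cW' mn N_def by simp
  have EIEH: "EI \<subseteq> EH" by (auto simp: EI_def EH_def induced_edges_def W_def W'_def)
  have EIEG: "EI \<subseteq> EG" by (auto simp: EI_def EG_def induced_edges_def W'_def)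
  have finEG: "finite EG" using EGsub finG by (meson finite_SigmaI finite_subset)
  have finEH: "finite EH" using EHsub finW by (meson finite_SigmaI finite_subset)
  have finEI: "finite EI" using EIsub finW' by (meson finite_SigmaI finite_subset)
  have outH: "out_nbrs EH v = out_nbrs EF v \<inter> W" if "v \<in> W" for v
    using that by (auto simp: EH_def out_nbrs_def induced_edges_def)
  have inH: "in_nbrs EH v = in_nbrs EF v \<inter> W" if "v \<in> W" for v
    using that by (auto simp: EH_def in_nbrs_def induced_edges_def)
  have outG: "out_nbrs EG v = out_nbrs EF v \<inter> VG" if "v \<in> VG" for v
    using that by (auto simp: EG_def out_nbrs_def induced_edges_def)
  have inG: "in_nbrs EG v = in_nbrs EF v \<inter> VG" if "v \<in> VG" for v
    using that by (auto simp: EG_def in_nbrs_def induced_edges_def)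
  have outHW: "out_nbrs EH v \<subseteq> W" for v using EHsub by (auto simp: out_nbrs_def)
  have inHW: "in_nbrs EH v \<subseteq> W" for v using EHsub by (auto simp: in_nbrs_def)
  have finoH: "finite (out_nbrs EH v)" for v using outHW finW by (rule finite_subset)
  have finiH: "finite (in_nbrs EH v)" for v using inHW finW by (rule finite_subset)
  define d0 where "d0 = (1/2+\<epsilon>)*real n - (real m + 1)"
  have d0b: "real n / 2 + 1 \<le> d0" using mn1 unfolding d0_def by (simp add: algebra_simps)
  have degH: "d0 \<le> real (card (out_nbrs EH v)) \<and> d0 \<le> real (card (in_nbrs EH v))" if v: "v \<in> W" for v
  proof -
    have A: "(1/2+\<epsilon>)*real n \<le> real (card (out_nbrs EF v \<inter> VG)) \<and> (1/2+\<epsilon>)*real n \<le> real (card (in_nbrs EF v \<inter> VG))"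
    proof (cases "v = u")
      case True then show ?thesis using uo ui by simp
    next
      case False
      then have "v \<in> VG" using v by (auto simp: W_def)
      then show ?thesis using degG outG inG by auto
    qed
    have s1: "out_nbrs EF v \<inter> VG - M \<subseteq> out_nbrs EH v" using v by (auto simp: outH W_def)
    have s2: "in_nbrs EF v \<inter> VG - M \<subseteq> in_nbrs EH v" using v by (auto simp: inH W_def)
    have c1: "real (card (out_nbrs EF v \<inter> VG)) - real (card M) \<le> real (card (out_nbrs EH v))"
      using card_diff_ge[of "out_nbrs EF v \<inter> VG" M] card_mono[OF finoH s1] finG finM by simp
    have c2: "real (card (in_nbrs EF v \<inter> VG)) - real (card M) \<le> real (card (in_nbrs EH v))"
      using card_diff_ge[of "in_nbrs EF v \<inter> VG" M] card_mono[OF finiH s2] finG finM by simp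
    show ?thesis using A c1 c2 cM unfolding d0_def by simp
  qed
  have cardHle: "real (card (out_nbrs EH v)) \<le> N \<and> real (card (in_nbrs EH v)) \<le> N" for v
  proof -
    have "real (card (out_nbrs EH v)) \<le> real (card W)" using card_mono[OF finW outHW[of v]] by simp
    moreover have "real (card (in_nbrs EH v)) \<le> real (card W)" using card_mono[OF finW inHW[of v]] by simp
    ultimately show ?thesis using cW by simp
  qed
  have comH: "\<epsilon>*real n \<le> real (card (in_nbrs EH w \<inter> in_nbrs EH w'))" if "w \<in> W" "w' \<in> W" for w w'
  proof -
    have "card (in_nbrs EH w) + card (in_nbrs EH w') = card (in_nbrs EH w \<union> in_nbrs EH w') + card (in_nbrs EH w \<inter> in_nbrs EH w')"
      by (rule card_Un_Int[OF finiH finiH])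
    moreover have "card (in_nbrs EH w \<union> in_nbrs EH w') \<le> card W" using inHW by (intro card_mono[OF finW]) auto
    ultimately have "real (card (in_nbrs EH w)) + real (card (in_nbrs EH w')) \<le> N + real (card (in_nbrs EH w \<inter> in_nbrs EH w'))"
      using cW by linarith
    then show ?thesis using degH[OF that(1)] degH[OF that(2)] unfolding d0_def N_def
      using mn1 by (simp add: algebra_simps)
  qed
  define y where "y e = (if fst e = u then 1 / real (card (out_nbrs EH u))
      else if snd e = u then 1 / real (card (in_nbrs EH u)) else real n / N * x e)" for e
  define \<rho> where "\<rho> = 2*e1 + 4/real n"
  have \<rho>p: "0 \<le> \<rho>" using e1p np by (simp add: \<rho>_def)
  have uW: "u \<in> W" by (simp add: W_def)
  have cuo: "real n / 2 \<le> real (card (out_nbrs EH u))" "real n / 2 \<le> real (card (in_nbrs EH u))"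
    using degH[OF uW] d0b by auto
  have rowsH: "\<forall>v\<in>W. \<bar>1 - (\<Sum>w\<in>out_nbrs EH v. y (v,w))\<bar> \<le> \<rho>"
  proof
    fix v assume v: "v \<in> W"
    show "\<bar>1 - (\<Sum>w\<in>out_nbrs EH v. y (v,w))\<bar> \<le> \<rho>"
    proof (cases "v = u")
      case True
      have cp: "real (card (out_nbrs EH u)) > 0" using cuo np by linarith
      have "(\<Sum>w\<in>out_nbrs EH v. y (v,w)) = (\<Sum>w\<in>out_nbrs EH u. 1 / real (card (out_nbrs EH u)))"
        using True by (simp add: y_def)
      also have "\<dots> = 1" using cp by simp
      finally show ?thesis using \<rho>p by simp
    next
      case False
      then have vG: "v \<in> VG" "v \<notin> M" using v by (auto simp: W_def)
      have set: "out_nbrs EH v - {u} = out_nbrs EG v - M"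
        using vG uG by (auto simp: EH_def EG_def W_def out_nbrs_def induced_edges_def)
      have split: "(\<Sum>w\<in>out_nbrs EH v. y (v,w)) = (\<Sum>w\<in>out_nbrs EH v - {u}. y (v,w)) + (if u \<in> out_nbrs EH v then y (v,u) else 0)"
        using sum_diff1[OF finoH[of v], of "\<lambda>w. y (v,w)" u] by auto
      have finoG: "finite (out_nbrs EG v)"
        by (rule finite_subset[OF _ finG]) (auto simp: out_nbrs_def EG_def induced_edges_def)
      have p1: "(\<Sum>w\<in>out_nbrs EG v - M. y (v,w)) = real n / N * (\<Sum>w\<in>out_nbrs EG v - M. x (v,w))"
      proof -
        have "w \<noteq> u" if "w \<in> out_nbrs EG v" for w using that EGsub uG by (auto simp: out_nbrs_def)
        then have "(\<Sum>w\<in>out_nbrs EG v - M. y (v,w)) = (\<Sum>w\<in>out_nbrs EG v - M. real n / N * x (v,w))"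
          using False by (intro sum.cong) (auto simp: y_def)
        then show ?thesis by (simp add: sum_distrib_left)
      qed
      have row1: "(\<Sum>w\<in>out_nbrs EG v. x (v,w)) = 1"
        using vG(1) pfm unfolding perfect_frac_matching_def EG_def by blast
      define \<sigma> where "\<sigma> = (\<Sum>w\<in>M \<inter> out_nbrs EG v. x (v,w))"
      have xs: "(\<Sum>w\<in>out_nbrs EG v - M. x (v,w)) = 1 - \<sigma>"
        using sum.Int_Diff[OF finoG, of "\<lambda>w. x (v,w)" M] row1 unfolding \<sigma>_def by (simp add: Int_commute)
      have sb: "(real m + 1)/real n - e1 \<le> \<sigma>" "\<sigma> \<le> (real m + 1)/real n + e1"
        using hyp vG(1) unfolding \<sigma>_def EG_def approx_eq_def by auto
      define t where "t = (if u \<in> out_nbrs EH v then y (v,u) else 0)"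
      have tb: "0 \<le> t" "t \<le> 2/real n"
      proof -
        have cp: "real (card (in_nbrs EH u)) > 0" using cuo np by linarith
        have yvu: "y (v,u) = 1 / real (card (in_nbrs EH u))" using False by (simp add: y_def)
        have "1 / real (card (in_nbrs EH u)) \<le> 1 / (real n / 2)"
          using cuo np by (intro divide_left_mono) auto
        then show "0 \<le> t" "t \<le> 2/real n" using cp np unfolding t_def yvu by auto
      qed
      have "\<bar>1 - (real n/(real n - real m) * (1-\<sigma>) + t)\<bar> \<le> 2*e1 + 4/real n"
        using row_arith[of "real n" "real m" e1 \<sigma> t] np mn2 sb tb by simp
      moreover have "(\<Sum>w\<in>out_nbrs EH v. y (v,w)) = real n/(real n - real m) * (1-\<sigma>) + t"
        unfolding split set p1 xs t_def N_def by simp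
      ultimately show ?thesis unfolding \<rho>_def by simp
    qed
  qed
  have colsH: "\<forall>w\<in>W. \<bar>1 - (\<Sum>v\<in>in_nbrs EH w. y (v,w))\<bar> \<le> \<rho>"
  proof
    fix v assume v: "v \<in> W"
    show "\<bar>1 - (\<Sum>w\<in>in_nbrs EH v. y (w,v))\<bar> \<le> \<rho>"
    proof (cases "v = u")
      case True
      have cp: "real (card (in_nbrs EH u)) > 0" using cuo np by linarith
      have nu: "w \<noteq> u" if "w \<in> in_nbrs EH u" for w using that noloop
        by (auto simp: in_nbrs_def EH_def induced_edges_def)
      have "(\<Sum>w\<in>in_nbrs EH v. y (w,v)) = (\<Sum>w\<in>in_nbrs EH u. 1 / real (card (in_nbrs EH u)))"
        using True nu by (intro sum.cong) (auto simp: y_def)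
      also have "\<dots> = 1" using cp by simp
      finally show ?thesis using \<rho>p by simp
    next
      case False
      then have vG: "v \<in> VG" "v \<notin> M" using v by (auto simp: W_def)
      have set: "in_nbrs EH v - {u} = in_nbrs EG v - M"
        using vG uG by (auto simp: EH_def EG_def W_def in_nbrs_def induced_edges_def)
      have split: "(\<Sum>w\<in>in_nbrs EH v. y (w,v)) = (\<Sum>w\<in>in_nbrs EH v - {u}. y (w,v)) + (if u \<in> in_nbrs EH v then y (u,v) else 0)"
        using sum_diff1[OF finiH[of v], of "\<lambda>w. y (w,v)" u] by auto
      have finiG: "finite (in_nbrs EG v)"
        by (rule finite_subset[OF _ finG]) (auto simp: in_nbrs_def EG_def induced_edges_def)
      have p1: "(\<Sum>w\<in>in_nbrs EG v - M. y (w,v)) = real n / N * (\<Sum>w\<in>in_nbrs EG v - M. x (w,v))"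
      proof -
        have "w \<noteq> u" if "w \<in> in_nbrs EG v" for w using that EGsub uG by (auto simp: in_nbrs_def)
        then have "(\<Sum>w\<in>in_nbrs EG v - M. y (w,v)) = (\<Sum>w\<in>in_nbrs EG v - M. real n / N * x (w,v))"
          using False by (intro sum.cong) (auto simp: y_def)
        then show ?thesis by (simp add: sum_distrib_left)
      qed
      have col1: "(\<Sum>w\<in>in_nbrs EG v. x (w,v)) = 1"
        using vG(1) pfm unfolding perfect_frac_matching_def EG_def by blast
      define \<sigma> where "\<sigma> = (\<Sum>w\<in>M \<inter> in_nbrs EG v. x (w,v))"
      have xs: "(\<Sum>w\<in>in_nbrs EG v - M. x (w,v)) = 1 - \<sigma>"
        using sum.Int_Diff[OF finiG, of "\<lambda>w. x (w,v)" M] col1 unfolding \<sigma>_def by (simp add: Int_commute)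
      have sb: "(real m + 1)/real n - e1 \<le> \<sigma>" "\<sigma> \<le> (real m + 1)/real n + e1"
        using hyp vG(1) unfolding \<sigma>_def EG_def approx_eq_def by auto
      define t where "t = (if u \<in> in_nbrs EH v then y (u,v) else 0)"
      have tb: "0 \<le> t" "t \<le> 2/real n"
      proof -
        have cp: "real (card (out_nbrs EH u)) > 0" using cuo np by linarith
        have yvu: "y (u,v) = 1 / real (card (out_nbrs EH u))" by (simp add: y_def)
        have "1 / real (card (out_nbrs EH u)) \<le> 1 / (real n / 2)"
          using cuo np by (intro divide_left_mono) auto
        then show "0 \<le> t" "t \<le> 2/real n" using cp np unfolding t_def yvu by auto
      qed
      have "\<bar>1 - (real n/(real n - real m) * (1-\<sigma>) + t)\<bar> \<le> 2*e1 + 4/real n"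
        using row_arith[of "real n" "real m" e1 \<sigma> t] np mn2 sb tb by simp
      moreover have "(\<Sum>w\<in>in_nbrs EH v. y (w,v)) = real n/(real n - real m) * (1-\<sigma>) + t"
        unfolding split set p1 xs t_def N_def by simp
      ultimately show ?thesis unfolding \<rho>_def by simp
    qed
  qed
  obtain z where zrow: "\<forall>v\<in>W. (\<Sum>w\<in>out_nbrs EH v. z (v,w)) = 1 \<and> (\<Sum>w\<in>in_nbrs EH v. z (w,v)) = 1"
    and zb0: "\<forall>e\<in>EH. \<bar>z e - y e\<bar> \<le> \<rho>/(real n/2) + 2*(\<rho> + real (card W)*\<rho>/(real n/2))/(\<epsilon>*real n)"
  proof -
    have "\<exists>z. (\<forall>v\<in>W. (\<Sum>w\<in>out_nbrs EH v. z (v,w)) = 1 \<and> (\<Sum>w\<in>in_nbrs EH v. z (w,v)) = 1) \<and>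
             (\<forall>e\<in>EH. \<bar>z e - y e\<bar> \<le> \<rho>/(real n/2) + 2*(\<rho> + real (card W)*\<rho>/(real n/2))/(\<epsilon>*real n))"
    proof (rule correction[OF finW EHsub])
      show "real n / 2 > 0" using np by simp
      show "\<epsilon> * real n > 0" using np ep by simp
      show "\<forall>v\<in>W. real n / 2 \<le> real (card (out_nbrs EH v))" using degH d0b by force
      show "\<forall>w\<in>W. \<forall>w'\<in>W. \<epsilon> * real n \<le> real (card (in_nbrs EH w \<inter> in_nbrs EH w'))" using comH by blast
    qed (use rowsH colsH in auto)
    then show ?thesis using that by blast
  qed
  have cB: "\<forall>e\<in>EH. \<bar>z e - y e\<bar> \<le> \<delta>/(2*b*N)"
  proof
    fix e assume "e \<in> EH"
    have "16*b*\<rho> \<le> \<epsilon>*\<delta>" using key unfolding \<rho>_def by (simp add: algebra_simps)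
    then have "\<rho>/(real n/2) + 2*(\<rho> + N*\<rho>/(real n/2))/(\<epsilon>*real n) \<le> \<delta>/(2*b*N)"
      using cb_arith[of "real n" N \<rho> \<epsilon> b \<delta>] np Np \<rho>p ep b2 by simp
    then show "\<bar>z e - y e\<bar> \<le> \<delta>/(2*b*N)" using zb0 \<open>e \<in> EH\<close> cW by fastforce
  qed
  have xb: "\<forall>e\<in>EG. 1/(b*real n) \<le> x e \<and> x e \<le> b/real n"
    using bnm cG unfolding b_normal_def EG_def by simp
  have ybound: "\<forall>e\<in>EH. 1/(b*N) \<le> y e \<and> y e \<le> b/N"
  proof
    fix e assume e: "e \<in> EH"
    obtain v w where vw: "e = (v,w)" by (cases e)
    have vW: "v \<in> W" and wW: "w \<in> W" and eF: "(v,w) \<in> EF" using e vw EHsub by (auto simp: EH_def induced_edges_def)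
    show "1/(b*N) \<le> y e \<and> y e \<le> b/N"
    proof (cases "v = u")
      case True
      then have "y e = 1 / real (card (out_nbrs EH u))" by (simp add: y_def vw)
      then show ?thesis using inv_card_bound[of "real n" "real (card (out_nbrs EH u))" N b] cuo cardHle Np b2 by simp
    next
      case False
      show ?thesis
      proof (cases "w = u")
        case True
        then have "y e = 1 / real (card (in_nbrs EH u))" using \<open>v \<noteq> u\<close> by (simp add: y_def vw)
        then show ?thesis using inv_card_bound[of "real n" "real (card (in_nbrs EH u))" N b] cuo cardHle Np b2 by simp
      next
        case False
        have ye: "y e = real n / N * x e" using \<open>v \<noteq> u\<close> False by (simp add: y_def vw)
        have eG: "e \<in> EG" using vW wW \<open>v \<noteq> u\<close> False eF vw by (auto simp: EG_def W_def induced_edges_def)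
        have x1: "1/(b*real n) \<le> x e" and x2: "x e \<le> b/real n" using xb eG by auto
        have nN: "real n / N > 0" using np Np by simp
        have "real n / N * (1/(b*real n)) \<le> real n / N * x e" using x1 nN by (intro mult_left_mono) auto
        moreover have "real n / N * (1/(b*real n)) = 1/(b*N)" using np by simp
        moreover have "real n / N * x e \<le> real n / N * (b/real n)" using x2 nN by (intro mult_left_mono) auto
        moreover have "real n / N * (b/real n) = b/N" using np by simp
        ultimately show ?thesis unfolding ye by simp
      qed
    qed
  qed
  have zbound: "\<forall>e\<in>EH. 1/((1+\<delta>)*b*N) \<le> z e \<and> z e \<le> (1+\<delta>)*b/N"
    using norm_arith[OF b2 Np(1) dp] ybound cB by blast
  have zpos: "\<forall>e\<in>EH. 0 < z e"
  proof
    fix e assume "e \<in> EH"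
    have "0 < 1/((1+\<delta>)*b*N)" using dp b2 Np by simp
    moreover have "1/((1+\<delta>)*b*N) \<le> z e" using zbound \<open>e \<in> EH\<close> by blast
    ultimately show "0 < z e" by linarith
  qed
  have pfmz: "perfect_frac_matching W EH z"
    unfolding perfect_frac_matching_def using zpos zrow by (auto simp: less_imp_le)
  have bnz: "b_normal ((1 + \<delta>) * b) W EH z"
    unfolding b_normal_def cW using zbound by simp
  have entz: "ent EH z \<ge> (real n - real m) / real n * ent EG x
            - (real n - real m) * log 2 (real n / (real n - real m))
            - (2*(2*real n + (real m)^2)*log 2 (b*real n)/real n + 4*real n*e1 + 4*(real m)^2/real n
               + real n*\<delta>*(ln (b*real n) + 2))"
  proof -
    define g where "g e = x e * log 2 (1 / x e)" for e
    define h where "h = ent EG x"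
    have hdef: "h = (\<Sum>e\<in>EG. g e)" by (simp add: h_def ent_def g_def)
    have bn1: "b / real n \<le> 1" using bn4 np b2 by (simp add: field_simps)
    have xpos: "0 < x e" "x e \<le> 1" if "e \<in> EG" for e
    proof -
      have "0 < 1/(b*real n)" using b2 np by simp
      moreover have "1/(b*real n) \<le> x e" "x e \<le> b/real n" using xb that by auto
      ultimately show "0 < x e" "x e \<le> 1" using bn1 by linarith+
    qed
    have gnn: "0 \<le> g e" if "e \<in> EG" for e
    proof -
      have "1 \<le> 1 / x e" using xpos[OF that] by simp
      then have "0 \<le> log 2 (1 / x e)" using xpos[OF that] by simp
      then show ?thesis unfolding g_def using xpos[OF that] by simp
    qed
    have rowG: "(\<Sum>w\<in>out_nbrs EG v. x (v,w)) = 1" if "v \<in> VG" for v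
      using that pfm unfolding perfect_frac_matching_def EG_def by blast
    have sumx: "(\<Sum>e\<in>EG. x e) = real n"
      using sum_edges_out[OF finG EGsub, of x] rowG cG by simp
    have Lnn: "0 \<le> log 2 (b * real n)"
    proof -
      have "1 \<le> b * real n" using b2 bn4 by (smt (verit) mult_le_cancel_left1)
      then show ?thesis by simp
    qed
    have hub: "h \<le> real n * log 2 (b * real n)"
    proof -
      have "g e \<le> x e * log 2 (b * real n)" if "e \<in> EG" for e
      proof -
        have "1/(b*real n) \<le> x e" using xb that by blast
        then have "1 / x e \<le> b * real n" using xpos[OF that] b2 np
          by (simp add: field_simps)
        moreover have "0 < b * real n" using b2 np by simp
        ultimately have "log 2 (1 / x e) \<le> log 2 (b * real n)" using xpos[OF that]
          by (subst log_le_cancel_iff) auto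
        then show ?thesis unfolding g_def using xpos[OF that] by (intro mult_left_mono) auto
      qed
      then have "h \<le> (\<Sum>e\<in>EG. x e * log 2 (b * real n))" unfolding hdef by (intro sum_mono) auto
      also have "\<dots> = real n * log 2 (b * real n)" using sumx by (simp add: sum_distrib_right[symmetric])
      finally show ?thesis .
    qed
    define A where "A = {e\<in>EG. snd e \<in> M}"
    define B where "B = {e\<in>EG. fst e \<in> M}"
    have finoG: "finite (out_nbrs EG v)" for v
      by (rule finite_subset[OF _ finG]) (auto simp: out_nbrs_def EG_def induced_edges_def)
    have finiG: "finite (in_nbrs EG v)" for v
      by (rule finite_subset[OF _ finG]) (auto simp: in_nbrs_def EG_def induced_edges_def)
    have hout: "(\<Sum>v\<in>VG. ent_out EG x v) = h"
      unfolding h_def ent_def ent_out_def using sum_edges_out[OF finG EGsub, of "\<lambda>e. x e * log 2 (1 / x e)"] by simp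
    have hin: "(\<Sum>v\<in>VG. ent_in EG x v) = h"
      unfolding h_def ent_def ent_in_def using sum_edges_in[OF finG EGsub, of "\<lambda>e. x e * log 2 (1 / x e)"] by simp
    have sA: "(\<Sum>e\<in>A. g e) \<le> (real m+1)/real n * h + real n * e1"
    proof -
      have "(\<Sum>e\<in>A. g e) = (\<Sum>e\<in>EG. if snd e \<in> M then g e else 0)"
        unfolding A_def by (rule sum.inter_filter[OF finEG])
      also have "\<dots> = (\<Sum>v\<in>VG. \<Sum>w\<in>out_nbrs EG v. if w \<in> M then g (v,w) else 0)"
        using sum_edges_out[OF finG EGsub, of "\<lambda>e. if snd e \<in> M then g e else 0"] by simp
      also have "\<dots> = (\<Sum>v\<in>VG. \<Sum>w\<in>M \<inter> out_nbrs EG v. g (v,w))"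
        by (rule sum.cong[OF refl]) (simp add: sum.inter_restrict[OF finoG, symmetric] Int_commute)
      also have "\<dots> \<le> (\<Sum>v\<in>VG. (real m+1)/real n * ent_out EG x v + e1)"
      proof (intro sum_mono)
        fix v assume "v \<in> VG"
        then show "(\<Sum>w\<in>M \<inter> out_nbrs EG v. g (v,w)) \<le> (real m+1)/real n * ent_out EG x v + e1"
          using hyp unfolding approx_eq_def g_def EG_def by auto
      qed
      also have "\<dots> = (real m+1)/real n * (\<Sum>v\<in>VG. ent_out EG x v) + (\<Sum>v\<in>VG. e1)"
        by (simp only: sum.distrib sum_distrib_left)
      also have "\<dots> = (real m+1)/real n * h + real n * e1"
        using hout cG by simp
      finally show ?thesis .
    qed
    have sB: "(\<Sum>e\<in>B. g e) \<le> (real m+1)/real n * h + real n * e1"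
    proof -
      have "(\<Sum>e\<in>B. g e) = (\<Sum>e\<in>EG. if fst e \<in> M then g e else 0)"
        unfolding B_def by (rule sum.inter_filter[OF finEG])
      also have "\<dots> = (\<Sum>w\<in>VG. \<Sum>v\<in>in_nbrs EG w. if v \<in> M then g (v,w) else 0)"
        using sum_edges_in[OF finG EGsub, of "\<lambda>e. if fst e \<in> M then g e else 0"] by simp
      also have "\<dots> = (\<Sum>w\<in>VG. \<Sum>v\<in>M \<inter> in_nbrs EG w. g (v,w))"
        by (rule sum.cong[OF refl]) (simp add: sum.inter_restrict[OF finiG, symmetric] Int_commute)
      also have "\<dots> \<le> (\<Sum>w\<in>VG. (real m+1)/real n * ent_in EG x w + e1)"
      proof (intro sum_mono)
        fix w assume "w \<in> VG"
        then show "(\<Sum>v\<in>M \<inter> in_nbrs EG w. g (v,w)) \<le> (real m+1)/real n * ent_in EG x w + e1"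
          using hyp unfolding approx_eq_def g_def EG_def by auto
      qed
      also have "\<dots> = (real m+1)/real n * (\<Sum>v\<in>VG. ent_in EG x v) + (\<Sum>v\<in>VG. e1)"
        by (simp only: sum.distrib sum_distrib_left)
      also have "\<dots> = (real m+1)/real n * h + real n * e1"
        using hin cG by simp
      finally show ?thesis .
    qed
    have finA: "finite A" and finB: "finite B" using finEG by (auto simp: A_def B_def)
    have diff: "EG - EI \<subseteq> A \<union> B"
      by (auto simp: A_def B_def EG_def EI_def W'_def induced_edges_def)
    have s1: "(\<Sum>e\<in>EG - EI. g e) \<le> (\<Sum>e\<in>A \<union> B. g e)"
      by (rule sum_mono2) (use finA finB diff gnn in \<open>auto simp: A_def B_def\<close>)
    have s2: "(\<Sum>e\<in>A \<union> B. g e) \<le> (\<Sum>e\<in>A. g e) + (\<Sum>e\<in>B. g e)"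
    proof -
      have "0 \<le> (\<Sum>e\<in>A \<inter> B. g e)" using gnn by (intro sum_nonneg) (auto simp: A_def)
      then show ?thesis using sum_Un[OF finA finB, of g] by linarith
    qed
    have hsplit: "h = (\<Sum>e\<in>EG - EI. g e) + (\<Sum>e\<in>EI. g e)"
      unfolding hdef by (rule sum.subset_diff[OF EIEG finEG])
    have S1b: "h*(1 - 2*(real m+1)/real n) - 2*real n*e1 \<le> (\<Sum>e\<in>EI. g e)"
    proof -
      define K where "K = (real m+1)/real n * h + real n * e1"
      have "h*(1 - 2*(real m+1)/real n) - 2*real n*e1 = h - K - K"
        unfolding K_def by (simp add: algebra_simps)
      moreover have "(\<Sum>e\<in>A. g e) \<le> K" "(\<Sum>e\<in>B. g e) \<le> K" using sA sB unfolding K_def by auto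
      ultimately show ?thesis using hsplit s1 s2 by linarith
    qed
    have S0b: "(\<Sum>e\<in>EI. x e) \<le> N" "0 \<le> (\<Sum>e\<in>EI. x e)"
    proof -
      have "(\<Sum>e\<in>EI. x e) = (\<Sum>v\<in>W'. \<Sum>w\<in>out_nbrs EI v. x (v,w))"
        by (rule sum_edges_out[OF finW' EIsub])
      also have "\<dots> \<le> (\<Sum>v\<in>W'. 1)"
      proof (intro sum_mono)
        fix v assume v: "v \<in> W'"
        have sub1: "out_nbrs EI v \<subseteq> out_nbrs EG v" using EIEG by (auto simp: out_nbrs_def)
        have "(\<Sum>w\<in>out_nbrs EI v. x (v,w)) \<le> (\<Sum>w\<in>out_nbrs EG v. x (v,w))"
          by (rule sum_mono2[OF finoG sub1]) (use xpos in \<open>force simp: out_nbrs_def\<close>)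
        also have "\<dots> = 1" using v rowG by (simp add: W'_def)
        finally show "(\<Sum>w\<in>out_nbrs EI v. x (v,w)) \<le> 1" .
      qed
      also have "\<dots> \<le> N" using cW'N by simp
      finally show "(\<Sum>e\<in>EI. x e) \<le> N" .
      show "0 \<le> (\<Sum>e\<in>EI. x e)" using xpos EIEG by (intro sum_nonneg) (force)
    qed
    have yEI: "y e = real n / N * x e" if "e \<in> EI" for e
    proof -
      have "fst e \<in> VG" "snd e \<in> VG" using that EIsub by (auto simp: W'_def)
      then show ?thesis using uG by (auto simp: y_def)
    qed
    have nNp: "real n / N > 0" using np Np by simp
    have entyEI: "(\<Sum>e\<in>EI. y e * log 2 (1 / y e)) = real n / N * ((\<Sum>e\<in>EI. g e) - log 2 (real n / N) * (\<Sum>e\<in>EI. x e))"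
    proof -
      have "(\<Sum>e\<in>EI. y e * log 2 (1 / y e)) = (\<Sum>e\<in>EI. real n / N * (g e - log 2 (real n / N) * x e))"
      proof (intro sum.cong refl)
        fix e assume e: "e \<in> EI"
        have "0 < x e" using xpos e EIEG by blast
        then show "y e * log 2 (1 / y e) = real n / N * (g e - log 2 (real n / N) * x e)"
          unfolding yEI[OF e] g_def using log_scale[OF nNp] by simp
      qed
      also have "\<dots> = real n / N * ((\<Sum>e\<in>EI. g e) - log 2 (real n / N) * (\<Sum>e\<in>EI. x e))"
        by (simp only: sum_distrib_left[symmetric] sum_subtractf)
      finally show ?thesis .
    qed
    have bNle: "2*b \<le> N" using bn4 Np by linarith
    have bN1: "1 \<le> b * N" using bNle b2 by (smt (verit) mult_le_cancel_left1)
    define c where "c = \<delta>/(2*b*N) * (ln (b*N) + 2) / ln 2"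
    have lnbN: "0 \<le> ln (b*N)" using bN1 by simp
    have cnn: "0 \<le> c" unfolding c_def using dp b2 Np lnbN by simp
    have zpert: "y e * log 2 (1 / y e) - c \<le> z e * log 2 (1 / z e)" if e: "e \<in> EI" for e
    proof -
      have eH: "e \<in> EH" using e EIEH by blast
      have y1: "1/(b*N) \<le> y e" and y2: "y e \<le> b/N" using ybound eH by auto
      have "0 < 1/(b*N)" using b2 Np by simp
      then have ypos: "0 < y e" using y1 by linarith
      have "b/N \<le> 1" using bNle Np b2 by simp
      then have yle1: "y e \<le> 1" using y2 by linarith
      have yinv: "1 / y e \<le> b * N" using y1 ypos b2 Np by (simp add: field_simps)
      have zy: "\<bar>z e - y e\<bar> \<le> \<delta>/(2*b*N)" using cB eH by blast
      have "\<delta>/(2*b*N) \<le> 1/(2*b*N)" using dp b2 Np by (intro divide_right_mono) auto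
      also have "\<dots> = (1/(b*N))/2" by simp
      also have "\<dots> \<le> y e / 2" using y1 by simp
      finally have zy2: "\<bar>z e - y e\<bar> \<le> y e / 2" using zy by linarith
      have "y e * log 2 (1 / y e) - \<bar>z e - y e\<bar> * (ln (b*N) + 2) / ln 2 \<le> z e * log 2 (1 / z e)"
        by (rule ent_pert[OF ypos yle1 yinv zy2])
      moreover have "\<bar>z e - y e\<bar> * (ln (b*N) + 2) / ln 2 \<le> c"
        unfolding c_def
      proof (rule divide_right_mono[OF mult_right_mono[OF zy]])
        show "0 \<le> ln (b*N) + 2" using lnbN by simp
        show "0 \<le> ln (2::real)" by simp
      qed
      ultimately show ?thesis by linarith
    qed
    have entH_ge: "(\<Sum>e\<in>EI. z e * log 2 (1 / z e)) \<le> ent EH z"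
    proof -
      have "0 \<le> z e * log 2 (1 / z e)" if "e \<in> EH" for e
      proof -
        have zp: "0 < z e" using zpos that by blast
        have "z e \<le> (1+\<delta>)*b/N" using zbound that by blast
        also have "\<dots> \<le> 2*b/N"
        proof (rule divide_right_mono[OF mult_right_mono])
          show "1 + \<delta> \<le> 2" using dp by simp
          show "0 \<le> b" using b2 by simp
          show "0 \<le> N" using Np by simp
        qed
        also have "\<dots> \<le> 1" using bNle Np by simp
        finally have "1 \<le> 1 / z e" using zp by simp
        then have "0 \<le> log 2 (1 / z e)" using zp by simp
        then show ?thesis using zp by simp
      qed
      then show ?thesis unfolding ent_def by (intro sum_mono2[OF finEH EIEH]) auto
    qed
    have cardEI: "real (card EI) \<le> N^2"
    proof -
      have "card EI \<le> card (W' \<times> W')" using EIsub by (intro card_mono) (auto simp: finW')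
      also have "\<dots> = card W' * card W'" by (simp add: card_cartesian_product)
      finally have "real (card EI) \<le> real (card W') * real (card W')" by (simp only: of_nat_mult[symmetric] of_nat_le_iff)
      also have "\<dots> \<le> N * N" using cW'N by (intro mult_mono) auto
      finally show ?thesis by (simp add: power2_eq_square)
    qed
    have err: "real (card EI) * c \<le> real n * \<delta> * (ln (b*real n) + 2)"
    proof -
      have "real (card EI) * c \<le> N^2 * c" using cardEI cnn by (intro mult_right_mono) auto
      also have "\<dots> = N * \<delta> * (ln (b*N) + 2) / (2*b*ln 2)" unfolding c_def using Np b2
        by (simp add: field_simps power2_eq_square)
      also have "\<dots> \<le> N * \<delta> * (ln (b*N) + 2)"
      proof -
        have "2*(1/2) \<le> b * ln 2" using mult_mono[OF b2 ln2_half] b2 by simp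
        then have "1 \<le> 2*b*ln 2" by simp
        moreover have "0 \<le> N * \<delta> * (ln (b*N) + 2)" using Np dp lnbN by simp
        ultimately have "N * \<delta> * (ln (b*N) + 2) / (2*b*ln 2) \<le> N * \<delta> * (ln (b*N) + 2) / 1"
          by (intro divide_left_mono) auto
        then show ?thesis by simp
      qed
      also have "\<dots> \<le> real n * \<delta> * (ln (b*real n) + 2)"
      proof -
        have "ln (b*N) \<le> ln (b*real n)" using Np b2 bN1 by simp
        moreover have "N*\<delta> \<le> real n*\<delta>" using Np dp by (intro mult_right_mono) auto
        ultimately show ?thesis using Np dp lnbN by (intro mult_mono) auto
      qed
      finally show ?thesis .
    qed
    have sumz: "(\<Sum>e\<in>EI. y e * log 2 (1 / y e)) - real (card EI) * c \<le> (\<Sum>e\<in>EI. z e * log 2 (1 / z e))"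
    proof -
      have "(\<Sum>e\<in>EI. y e * log 2 (1 / y e) - c) \<le> (\<Sum>e\<in>EI. z e * log 2 (1 / z e))"
        using zpert by (intro sum_mono) auto
      then show ?thesis by (simp add: sum_subtractf)
    qed
    have lognn: "0 \<le> log 2 (real n / N)" using Np by simp
    have logS0: "real n / N * (log 2 (real n / N) * (\<Sum>e\<in>EI. x e)) \<le> real n * log 2 (real n / N)"
    proof -
      have "log 2 (real n / N) * (\<Sum>e\<in>EI. x e) \<le> log 2 (real n / N) * N"
        using S0b lognn by (intro mult_left_mono) auto
      then have "real n / N * (log 2 (real n / N) * (\<Sum>e\<in>EI. x e)) \<le> real n / N * (log 2 (real n / N) * N)"
        using nNp by (rule mult_left_mono[OF _ less_imp_le])
      also have "\<dots> = real n * log 2 (real n / N)" using Np by simp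
      finally show ?thesis .
    qed
    have S1n: "real n / N * (h*(1 - 2*(real m+1)/real n) - 2*real n*e1) \<le> real n / N * (\<Sum>e\<in>EI. g e)"
      using S1b nNp by (intro mult_left_mono) auto
    have E0: "(real n/N)*(h*(1 - 2*(real m+1)/real n) - 2*real n*e1) - real n*log 2 (real n/N) - real n * \<delta> * (ln (b*real n) + 2) \<le> ent EH z"
    proof -
      have "real n / N * ((\<Sum>e\<in>EI. g e) - log 2 (real n / N) * (\<Sum>e\<in>EI. x e)) =
            real n / N * (\<Sum>e\<in>EI. g e) - real n / N * (log 2 (real n / N) * (\<Sum>e\<in>EI. x e))"
        by (simp add: right_diff_distrib)
      then show ?thesis using entyEI sumz entH_ge err logS0 S1n by linarith
    qed
    have "N/real n*h - N*log 2 (real n/N) - (2*(2*real n + (real m)^2)*log 2 (b*real n)/real n + 4*real n*e1 + 4*(real m)^2/real n + real n * \<delta> * (ln (b*real n) + 2)) \<le> ent EH z"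
      by (rule fin_arith[OF np _ mn2 N_def hub Lnn e1p E0]) simp
    then show ?thesis unfolding h_def N_def by simp
  qed
  show ?thesis using pfmz bnz entz unfolding W_def EH_def EG_def by blast
qed

lemma err_bound:
  fixes n m mb b e1 \<delta> P n8 :: real
  assumes n: "n \<ge> 1" and m: "0 \<le> m" "m \<le> mb" and b2: "b \<ge> 2"
    and A: "8*(2*n + mb^2)*(ln b + ln n) < ln 2 * n * n8"
    and B: "16 * mb^2 < n * n8" and n8: "n8 \<le> P"
    and F1: "4*n*e1 \<le> P/4" and F2: "n*\<delta>*(ln (b*n) + 2) \<le> P/4"
  shows "2*(2*n + m^2)*log 2 (b*n)/n + 4*n*e1 + 4*m^2/n + n*\<delta>*(ln (b*n) + 2) \<le> P"
proof -
  have np: "n > 0" using n by simp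
  have lb: "0 \<le> ln b" using b2 by simp
  have ln: "0 \<le> ln n" using n by simp
  have l2: "ln (2::real) > 0" by simp
  have mm: "m^2 \<le> mb^2" using m by (intro power_mono) auto
  have lg: "log 2 (b*n) = (ln b + ln n) / ln 2" using b2 np by (simp add: log_def ln_mult)
  have t1: "2*(2*n + m^2)*log 2 (b*n)/n \<le> P/4"
  proof -
    have "2*(2*n + m^2)*log 2 (b*n)/n = 2*(2*n + m^2)*(ln b + ln n) / (ln 2 * n)"
      unfolding lg by (simp add: field_simps)
    also have "\<dots> \<le> 2*(2*n + mb^2)*(ln b + ln n) / (ln 2 * n)"
      using mm lb ln np l2 by (intro divide_right_mono mult_right_mono) auto
    also have "\<dots> \<le> n8/4"
    proof -
      have "2*(2*n + mb^2)*(ln b + ln n) \<le> (n8/4) * (ln 2 * n)" using A by (simp add: field_simps)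
      then show ?thesis using np l2 by (simp add: divide_le_eq mult.commute)
    qed
    finally show ?thesis using n8 by simp
  qed
  have t3: "4*m^2/n \<le> P/4"
  proof -
    have "4*m^2/n \<le> 4*mb^2/n" using mm np by (intro divide_right_mono) auto
    also have "\<dots> \<le> n8/4" using B np by (simp add: field_simps)
    finally show ?thesis using n8 by simp
  qed
  show ?thesis using t1 t3 F1 F2 by linarith
qed

lemma main_n:
  fixes \<epsilon> b \<gamma> :: real and n :: nat
  assumes ep: "0 < \<epsilon>" "\<epsilon> \<le> 1" and b2: "2 \<le> b" and g: "0 < \<gamma>"
    and NF: "max 3 (4*b) \<le> real n \<and>
     mbd n + 2 < \<epsilon> * real n \<and> 2 * mbd n < real n \<and>
     8*(2*real n + (mbd n)^2)*(ln b + ln (real n)) < ln 2 * real n * real n powr (1/8) \<and>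
     16 * (mbd n)^2 < real n * real n powr (1/8) \<and>
     (let s = sqrt (ln (real n)) in 1 \<le> s \<and> 100*\<gamma> \<le> s \<and> 16*exp(s/24) \<le> exp(s/18) \<and>
     4*(ln b + s^2 + 2)*exp(s/24) \<le> exp(s/22) \<and>
     32*b/exp(s/18) + 64*b/exp(s^2/4) \<le> \<epsilon>/exp(s/22))"
  shows "\<forall>(VF::'a set) EF VG u (x::'a \<times> 'a \<Rightarrow> real) (m::nat) M.
     digraph VF EF \<longrightarrow> VG \<subseteq> VF \<longrightarrow>
     n_eps_digraph n \<epsilon> VG (induced_edges EF VG) \<longrightarrow>
     u \<in> VF - VG \<longrightarrow>
     perfect_frac_matching VG (induced_edges EF VG) x \<longrightarrow>
     b_normal b VG (induced_edges EF VG) x \<longrightarrow>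
     real n powr (1/4) \<le> real m \<longrightarrow>
     real m \<le> 3 * exp (\<gamma> * sqrt (ln (real n))) * real n powr (1/4) \<longrightarrow>
     M \<subseteq> VG \<longrightarrow> card M = m + 1 \<longrightarrow>
     (\<forall>v\<in>VG.
        approx_eq (\<Sum>w\<in>M \<inter> out_nbrs (induced_edges EF VG) v. x (v, w))
          ((real m + 1) / real n) (real n powr (-3/4 - 1 / (18 * sqrt (ln (real n))))) \<and>
        approx_eq (\<Sum>w\<in>M \<inter> in_nbrs (induced_edges EF VG) v. x (w, v))
          ((real m + 1) / real n) (real n powr (-3/4 - 1 / (18 * sqrt (ln (real n))))) \<and>
        approx_eq (\<Sum>w\<in>M \<inter> out_nbrs (induced_edges EF VG) v. x (v, w) * log 2 (1 / x (v, w)))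
          ((real m + 1) / real n * ent_out (induced_edges EF VG) x v)
          (real n powr (-3/4 - 1 / (18 * sqrt (ln (real n))))) \<and>
        approx_eq (\<Sum>w\<in>M \<inter> in_nbrs (induced_edges EF VG) v. x (w, v) * log 2 (1 / x (w, v)))
          ((real m + 1) / real n * ent_in (induced_edges EF VG) x v)
          (real n powr (-3/4 - 1 / (18 * sqrt (ln (real n)))))) \<longrightarrow>
     real (card (out_nbrs EF u \<inter> VG)) \<ge> (1/2 + \<epsilon>) * real n \<longrightarrow>
     real (card (in_nbrs EF u \<inter> VG)) \<ge> (1/2 + \<epsilon>) * real n \<longrightarrow>
     approx_eq (real (card (out_nbrs EF u \<inter> VG \<inter> M)))
       ((real m + 1) / real n * real (card (out_nbrs EF u \<inter> VG)))
       (real n powr (1/4 - 1 / (17 * sqrt (ln (real n))))) \<longrightarrow>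
     approx_eq (real (card (in_nbrs EF u \<inter> VG \<inter> M)))
       ((real m + 1) / real n * real (card (in_nbrs EF u \<inter> VG)))
       (real n powr (1/4 - 1 / (17 * sqrt (ln (real n))))) \<longrightarrow>
     (\<exists>z. perfect_frac_matching ((VG - M) \<union> {u}) (induced_edges EF ((VG - M) \<union> {u})) z \<and>
          b_normal ((1 + real n powr (-3/4 - 1 / (22 * sqrt (ln (real n))))) * b)
            ((VG - M) \<union> {u}) (induced_edges EF ((VG - M) \<union> {u})) z \<and>
          ent (induced_edges EF ((VG - M) \<union> {u})) z \<ge>
            (real n - real m) / real n * ent (induced_edges EF VG) x
            - (real n - real m) * log 2 (real n / (real n - real m))
            - real n powr (1/4 - 1 / (24 * sqrt (ln (real n)))))"
  apply (intro allI impI)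
  subgoal premises p for VF EF VG u x m M
  proof -
    define s where "s = sqrt (ln (real n))"
    have n3: "3 \<le> real n" and bn4: "4*b \<le> real n" using NF by auto
    have mb1: "mbd n + 2 < \<epsilon> * real n" and mb2: "2 * mbd n < real n"
      and A: "8*(2*real n + (mbd n)^2)*(ln b + ln (real n)) < ln 2 * real n * real n powr (1/8)"
      and B: "16 * (mbd n)^2 < real n * real n powr (1/8)" using NF by auto
    have S: "1 \<le> s" "100*\<gamma> \<le> s" "16*exp(s/24) \<le> exp(s/18)"
      "4*(ln b + s^2 + 2)*exp(s/24) \<le> exp(s/22)"
      "32*b/exp(s/18) + 64*b/exp(s^2/4) \<le> \<epsilon>/exp(s/22)"
      using NF unfolding s_def Let_def by auto
    note nf = num_facts[OF n3 s_def S b2 g ep(1)]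
    have mle: "real m \<le> mbd n"
    proof -
      have "real m \<le> 3 * exp (\<gamma> * sqrt (ln (real n))) * real n powr (1/4)" using p(8) .
      also have "\<dots> \<le> 3 * real n powr (1/100) * real n powr (1/4)"
        using nf(1) unfolding s_def by (intro mult_right_mono) auto
      finally show ?thesis unfolding mbd_def .
    qed
    have mn1: "real m + 2 \<le> \<epsilon> * real n" using mle mb1 by linarith
    have mn2: "2 * real m \<le> real n" using mle mb2 by linarith
    have dp1: "0 < real n powr (-3/4 - 1 / (22 * sqrt (ln (real n))))" using nf(2) unfolding dlf_def .
    have dp2: "real n powr (-3/4 - 1 / (22 * sqrt (ln (real n)))) \<le> 1" using nf(3) unfolding dlf_def .
    have e1p: "0 \<le> real n powr (-3/4 - 1 / (18 * sqrt (ln (real n))))" using nf(4) unfolding e1f_def .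
    have key: "32*b*real n powr (-3/4 - 1 / (18 * sqrt (ln (real n)))) + 64*b/real n
        \<le> \<epsilon> * real n powr (-3/4 - 1 / (22 * sqrt (ln (real n))))" using nf(5) unfolding e1f_def dlf_def .
    obtain z where z1: "perfect_frac_matching ((VG - M) \<union> {u}) (induced_edges EF ((VG - M) \<union> {u})) z"
      and z2: "b_normal ((1 + real n powr (-3/4 - 1 / (22 * sqrt (ln (real n))))) * b) ((VG - M) \<union> {u}) (induced_edges EF ((VG - M) \<union> {u})) z"
      and z3: "ent (induced_edges EF ((VG - M) \<union> {u})) z \<ge>
            (real n - real m) / real n * ent (induced_edges EF VG) x
            - (real n - real m) * log 2 (real n / (real n - real m))
            - (2*(2*real n + (real m)^2)*log 2 (b*real n)/real n
               + 4*real n*real n powr (-3/4 - 1 / (18 * sqrt (ln (real n))))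
               + 4*(real m)^2/real n
               + real n*real n powr (-3/4 - 1 / (22 * sqrt (ln (real n))))*(ln (b*real n) + 2))"
      using core[OF p(1) p(2) p(3) p(4) p(5) p(6) p(9) p(10) p(11) p(12) p(13) ep b2 mn1 mn2 bn4 dp1 dp2 e1p key]
      by blast
    have eb: "2*(2*real n + (real m)^2)*log 2 (b*real n)/real n
               + 4*real n*real n powr (-3/4 - 1 / (18 * sqrt (ln (real n))))
               + 4*(real m)^2/real n
               + real n*real n powr (-3/4 - 1 / (22 * sqrt (ln (real n))))*(ln (b*real n) + 2)
          \<le> real n powr (1/4 - 1 / (24 * sqrt (ln (real n))))"
    proof (rule err_bound[OF _ _ mle b2 A B])
      show "1 \<le> real n" using n3 by simp
      show "0 \<le> real m" by simp
      show "real n powr (1/8) \<le> real n powr (1/4 - 1 / (24 * sqrt (ln (real n))))" using nf(8) unfolding Pf_def .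
      show "4*real n*real n powr (-3/4 - 1 / (18 * sqrt (ln (real n)))) \<le> real n powr (1/4 - 1 / (24 * sqrt (ln (real n))))/4"
        using nf(6) unfolding Pf_def e1f_def .
      show "real n*real n powr (-3/4 - 1 / (22 * sqrt (ln (real n))))*(ln (b*real n) + 2) \<le> real n powr (1/4 - 1 / (24 * sqrt (ln (real n))))/4"
        using nf(7) unfolding Pf_def dlf_def .
    qed
    show ?thesis using z1 z2 z3 eb by (intro exI[of _ z]) auto
  qed
  done

theorem lemma4p5:
  "\<forall>\<epsilon>::real. 0 < \<epsilon> \<and> \<epsilon> \<le> 1 \<longrightarrow>
   (\<exists>b0::real. \<forall>b\<ge>b0. \<exists>\<gamma>0::real. \<gamma>0 > 0 \<and>
   (\<forall>\<gamma>. 0 < \<gamma> \<and> \<gamma> \<le> \<gamma>0 \<longrightarrow> (\<exists>n0::nat. \<forall>n\<ge>n0.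
   \<forall>(VF::'a set) EF VG u (x::'a \<times> 'a \<Rightarrow> real) (m::nat) M.
     digraph VF EF \<longrightarrow> VG \<subseteq> VF \<longrightarrow>
     n_eps_digraph n \<epsilon> VG (induced_edges EF VG) \<longrightarrow>
     u \<in> VF - VG \<longrightarrow>
     perfect_frac_matching VG (induced_edges EF VG) x \<longrightarrow>
     b_normal b VG (induced_edges EF VG) x \<longrightarrow>
     real n powr (1/4) \<le> real m \<longrightarrow>
     real m \<le> 3 * exp (\<gamma> * sqrt (ln (real n))) * real n powr (1/4) \<longrightarrow>
     M \<subseteq> VG \<longrightarrow> card M = m + 1 \<longrightarrow>
     (\<forall>v\<in>VG.
        approx_eq (\<Sum>w\<in>M \<inter> out_nbrs (induced_edges EF VG) v. x (v, w))
          ((real m + 1) / real n) (real n powr (-3/4 - 1 / (18 * sqrt (ln (real n))))) \<and>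
        approx_eq (\<Sum>w\<in>M \<inter> in_nbrs (induced_edges EF VG) v. x (w, v))
          ((real m + 1) / real n) (real n powr (-3/4 - 1 / (18 * sqrt (ln (real n))))) \<and>
        approx_eq (\<Sum>w\<in>M \<inter> out_nbrs (induced_edges EF VG) v. x (v, w) * log 2 (1 / x (v, w)))
          ((real m + 1) / real n * ent_out (induced_edges EF VG) x v)
          (real n powr (-3/4 - 1 / (18 * sqrt (ln (real n))))) \<and>
        approx_eq (\<Sum>w\<in>M \<inter> in_nbrs (induced_edges EF VG) v. x (w, v) * log 2 (1 / x (w, v)))
          ((real m + 1) / real n * ent_in (induced_edges EF VG) x v)
          (real n powr (-3/4 - 1 / (18 * sqrt (ln (real n)))))) \<longrightarrow>
     real (card (out_nbrs EF u \<inter> VG)) \<ge> (1/2 + \<epsilon>) * real n \<longrightarrow>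
     real (card (in_nbrs EF u \<inter> VG)) \<ge> (1/2 + \<epsilon>) * real n \<longrightarrow>
     approx_eq (real (card (out_nbrs EF u \<inter> VG \<inter> M)))
       ((real m + 1) / real n * real (card (out_nbrs EF u \<inter> VG)))
       (real n powr (1/4 - 1 / (17 * sqrt (ln (real n))))) \<longrightarrow>
     approx_eq (real (card (in_nbrs EF u \<inter> VG \<inter> M)))
       ((real m + 1) / real n * real (card (in_nbrs EF u \<inter> VG)))
       (real n powr (1/4 - 1 / (17 * sqrt (ln (real n))))) \<longrightarrow>
     (\<exists>z. perfect_frac_matching ((VG - M) \<union> {u}) (induced_edges EF ((VG - M) \<union> {u})) z \<and>
          b_normal ((1 + real n powr (-3/4 - 1 / (22 * sqrt (ln (real n))))) * b)
            ((VG - M) \<union> {u}) (induced_edges EF ((VG - M) \<union> {u})) z \<and>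
          ent (induced_edges EF ((VG - M) \<union> {u})) z \<ge>
            (real n - real m) / real n * ent (induced_edges EF VG) x
            - (real n - real m) * log 2 (real n / (real n - real m))
            - real n powr (1/4 - 1 / (24 * sqrt (ln (real n))))))))"
  apply (intro allI impI)
  apply (rule exI[of _ 2])
  apply (intro allI impI)
  apply (rule exI[of _ 1])
  apply (intro conjI allI impI)
   apply simp
  subgoal premises p for \<epsilon> b \<gamma>
  proof -
    have e: "0 < \<epsilon>" "\<epsilon> \<le> 1" using p by auto
    have b: "2 \<le> b" using p by auto
    have g: "0 < \<gamma>" using p by auto
    obtain n0 where n0: "\<forall>n\<ge>n0. max 3 (4*b) \<le> real n \<and>
     mbd n + 2 < \<epsilon> * real n \<and> 2 * mbd n < real n \<and>
     8*(2*real n + (mbd n)^2)*(ln b + ln (real n)) < ln 2 * real n * real n powr (1/8) \<and>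
     16 * (mbd n)^2 < real n * real n powr (1/8) \<and>
     (let s = sqrt (ln (real n)) in 1 \<le> s \<and> 100*\<gamma> \<le> s \<and> 16*exp(s/24) \<le> exp(s/18) \<and>
     4*(ln b + s^2 + 2)*exp(s/24) \<le> exp(s/22) \<and>
     32*b/exp(s/18) + 64*b/exp(s^2/4) \<le> \<epsilon>/exp(s/22))"
      using n_facts[OF e(1) b g] unfolding eventually_sequentially by blast
    show ?thesis
      apply (rule exI[of _ n0], rule allI, rule impI)
      apply (rule main_n[OF e b g n0[rule_format]])
      apply assumption
      done
  qed
  done

end
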